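(* Let $W^*:=W^*_{1/2}$ start in $0$. Then <ol> <li>for every $\beta>0$, $\sup_{1\le n\le N^\beta}\big|\log_N W^*(n)-\log_N\sqrt n\big|\to0$ almost surely as $N\to\infty$;</li> <li>$\max_{1\le k\le N}\ \max_{\tau_k(W^* )\le n<\tau_{k+1}(W^* )}\big(\log_N k-\log_N W^*(n)\big)\to0$ almost surely as $N\to\infty$.</li> </ol>
   Context: $W_{1/2}^*$ is the Markov chain on $\mathbb N_0$ (a Bessel-like random walk) with $\mathbb P(W^*_{1/2}(1)=1\mid W^*_{1/2}(0)=0)=1$ and $\mathbb P(W^*_{1/2}(1)=k\pm1\mid W^*_{1/2}(0)=k)=\frac12\cdot\frac{k\pm1}{k}$ for $k\in\mathbb N$. For a path $w$, $\tau_k(w):=\min\{n\in\mathbb N_0: w(n)=k\}$. $\log_N x=\log x/\log N$. *)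

theory Defs
  imports "HOL-Probability.Probability"
begin

definition wstar_p :: "nat \<Rightarrow> nat \<Rightarrow> real" where
  "wstar_p k j =
     (if k = 0 then (if j = 1 then 1 else 0)
      else if j = k + 1 then (1/2) * (real (k + 1) / real k)
      else if j + 1 = k then (1/2) * (real (k - 1) / real k)
      else 0)"

definition is_wstar_chain :: "'a measure \<Rightarrow> (nat \<Rightarrow> 'a \<Rightarrow> nat) \<Rightarrow> bool" where
  "is_wstar_chain M W \<longleftrightarrow>
     prob_space M \<and>
     (\<forall>n. W n \<in> measurable M (count_space UNIV)) \<and>
     measure M {\<omega> \<in> space M. W 0 \<omega> = 0} = 1 \<and>
     (\<forall>n (h :: nat list) j. length h = Suc n \<longrightarrow>
        measure M {\<omega> \<in> space M. (\<forall>i\<le>n. W i \<omega> = h ! i) \<and> W (Suc n) \<omega> = j}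
        = measure M {\<omega> \<in> space M. \<forall>i\<le>n. W i \<omega> = h ! i} * wstar_p (last h) j)"

text \<open>First hitting time tau_k(w) = min{n. w n = k} (LEAST; arbitrary if never hit).\<close>
definition hit_time :: "nat \<Rightarrow> (nat \<Rightarrow> nat) \<Rightarrow> nat" where
  "hit_time k w = (LEAST n. w n = k)"

end

theory Submission
  imports Defs "HOL-Real_Asymp.Real_Asymp"
begin


definition valid :: "nat list \<Rightarrow> bool" where
  "valid h \<longleftrightarrow> h \<noteq> [] \<and> h!0 = 0 \<and>
     (\<forall>i. Suc i < length h \<longrightarrow> h!(Suc i) = h!i + 1 \<or> (2 \<le> h!i \<and> h!(Suc i) + 1 = h!i))"

lemma valid_snoc: "valid (h @ [x]) \<longleftrightarrow> (h = [] \<and> x = 0) \<or>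
   (valid h \<and> (x = last h + 1 \<or> (2 \<le> last h \<and> x + 1 = last h)))"
proof (cases "h = []")
  case True then show ?thesis by (auto simp: valid_def)
next
  case False
  then obtain n where n: "length h = Suc n" by (cases h) auto
  have l: "last h = h ! n" using n False by (simp add: last_conv_nth)
  show ?thesis
  proof
    assume v: "valid (h @ [x])"
    have "valid h" unfolding valid_def
    proof (intro conjI allI impI)
      show "h \<noteq> []" by fact
      show "h!0 = 0" using v n by (simp add: valid_def nth_append)
      fix i assume "Suc i < length h"
      then show "h ! Suc i = h ! i + 1 \<or> 2 \<le> h ! i \<and> h ! Suc i + 1 = h ! i"
        using v n unfolding valid_def
        by (metis (no_types, lifting) Suc_lessD length_append_singleton less_SucI nth_append_left)
    qed
    moreover have "x = last h + 1 \<or> (2 \<le> last h \<and> x + 1 = last h)"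
      using v n l unfolding valid_def
      by (metis (no_types, lifting) length_append_singleton lessI nth_append_left nth_append_length)
    ultimately show "(h = [] \<and> x = 0) \<or> (valid h \<and> (x = last h + 1 \<or> (2 \<le> last h \<and> x + 1 = last h)))"
      by blast
  next
    assume a: "(h = [] \<and> x = 0) \<or> (valid h \<and> (x = last h + 1 \<or> (2 \<le> last h \<and> x + 1 = last h)))"
    then have v: "valid h" and x: "x = last h + 1 \<or> (2 \<le> last h \<and> x + 1 = last h)" using False by auto
    show "valid (h @ [x])" unfolding valid_def
    proof (intro conjI allI impI)
      show "h @ [x] \<noteq> []" by simp
      show "(h @ [x]) ! 0 = 0" using v False by (simp add: valid_def nth_append)
      fix i assume i: "Suc i < length (h @ [x])"
      show "(h @ [x]) ! Suc i = (h @ [x]) ! i + 1 \<or> 2 \<le> (h @ [x]) ! i \<and> (h @ [x]) ! Suc i + 1 = (h @ [x]) ! i"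
      proof (cases "Suc i < length h")
        case True then show ?thesis using v by (simp add: valid_def nth_append)
      next
        case False
        then have "i = n" using i n by simp
        then show ?thesis using x l n by (simp add: nth_append)
      qed
    qed
  qed
qed

lemma valid_bounds: "valid h \<Longrightarrow> i < length h \<Longrightarrow> h!i \<le> i \<and> (1 \<le> i \<longrightarrow> 1 \<le> h!i)"
proof (induction i)
  case 0 then show ?case by (simp add: valid_def)
next
  case (Suc i)
  then have "h!(Suc i) = h!i + 1 \<or> (2 \<le> h!i \<and> h!(Suc i) + 1 = h!i)" by (simp add: valid_def)
  then show ?case using Suc by auto
qed

lemma valid_last: "valid h \<Longrightarrow> length h = Suc n \<Longrightarrow> last h \<le> n \<and> (1 \<le> n \<longrightarrow> 1 \<le> last h)"
  using valid_bounds[of h n] by (auto simp: last_conv_nth valid_def)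

lemma wstar_p_nonneg: "wstar_p k j \<ge> 0"
  by (simp add: wstar_p_def)

lemma wstar_p_sum:
  fixes g :: "nat \<Rightarrow> real"
  assumes "k \<le> n"
  shows "(\<Sum>j\<le>Suc n. wstar_p k j * g j) =
     (if k = 0 then g 1 else (real (k+1) / (2 * real k)) * g (k+1) + (real (k-1) / (2*real k)) * g (k-1))"
proof (cases "k = 0")
  case True
  have "(\<Sum>j\<le>Suc n. wstar_p k j * g j) = (\<Sum>j\<in>{1}. wstar_p k j * g j)"
    by (rule sum.mono_neutral_right) (auto simp: wstar_p_def True)
  then show ?thesis using True by (simp add: wstar_p_def)
next
  case False
  have d: "k + 1 \<noteq> k - 1" by simp
  have "(\<Sum>j\<le>Suc n. wstar_p k j * g j) = (\<Sum>j\<in>{k+1, k-1}. wstar_p k j * g j)"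
    by (rule sum.mono_neutral_right) (use assms False in \<open>auto simp: wstar_p_def\<close>)
  also have "\<dots> = wstar_p k (k+1) * g (k+1) + wstar_p k (k-1) * g (k-1)"
    using d by simp
  also have "\<dots> = (real (k+1) / (2 * real k)) * g (k+1) + (real (k-1) / (2*real k)) * g (k-1)"
    using False by (simp add: wstar_p_def)
  finally show ?thesis using False by simp
qed

lemma wstar_p_rowsum: "k \<le> n \<Longrightarrow> (\<Sum>j\<le>Suc n. wstar_p k j) = 1"
  using wstar_p_sum[of k n "\<lambda>_. 1"] by (auto simp: field_simps of_nat_diff)


definition Sn :: "nat \<Rightarrow> nat list set" where
  "Sn n = {h. set h \<subseteq> {..n} \<and> length h = Suc n}"

lemma finite_Sn: "finite (Sn n)"
  unfolding Sn_def by (rule finite_lists_length_eq) simp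

lemma valid_in_Sn: assumes "valid h" "length h = Suc n" shows "h \<in> Sn n"
proof -
  have "x \<in> {..n}" if xh: "x \<in> set h" for x
  proof -
    obtain i where "i < length h" "h!i = x" using xh unfolding in_set_conv_nth by blast
    then show "x \<in> {..n}" using valid_bounds[of h i] assms by auto
  qed
  then show ?thesis using assms by (auto simp: Sn_def)
qed

locale wchain =
  fixes M :: "'a measure" and W :: "nat \<Rightarrow> 'a \<Rightarrow> nat"
  assumes ch: "is_wstar_chain M W"
begin

sublocale prob_space M using conjunct1[OF ch[unfolded is_wstar_chain_def]] .

lemma W_meas[measurable]: "W n \<in> measurable M (count_space UNIV)"
  using conjunct1[OF conjunct2[OF ch[unfolded is_wstar_chain_def]]] by blast

definition pre :: "nat \<Rightarrow> 'a \<Rightarrow> nat list" where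
  "pre n \<omega> = map (\<lambda>i. W i \<omega>) [0..<Suc n]"

definition Q :: "nat list \<Rightarrow> real" where
  "Q h = measure M {\<omega> \<in> space M. \<forall>i<length h. W i \<omega> = h!i}"

definition Ex :: "nat \<Rightarrow> (nat list \<Rightarrow> real) \<Rightarrow> real" where
  "Ex n F = (\<Sum>h\<in>Sn n. Q h * F h)"

lemma Q_nonneg: "Q h \<ge> 0" by (simp add: Q_def)

lemma ev_sets: "{\<omega> \<in> space M. \<forall>i<m. W i \<omega> = f i} \<in> sets M"
  by measurable

lemma pre_length[simp]: "length (pre n \<omega>) = Suc n"
  by (simp add: pre_def del: upt_Suc)

lemma pre_nth[simp]: "i \<le> n \<Longrightarrow> pre n \<omega> ! i = W i \<omega>"
  by (simp add: pre_def del: upt_Suc add: nth_map_upt)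

lemma pre_eq: "length h = Suc n \<Longrightarrow> pre n \<omega> = h \<longleftrightarrow> (\<forall>i<length h. W i \<omega> = h!i)"
  by (auto simp: list_eq_iff_nth_eq less_Suc_eq_le)

lemma pre_meas[measurable]: "pre n \<in> measurable M (count_space UNIV)"
proof (subst measurable_count_space_eq2_countable, safe)
  fix h :: "nat list"
  have "pre n -` {h} \<inter> space M = (if length h = Suc n then {\<omega> \<in> space M. \<forall>i<length h. W i \<omega> = h!i} else {})"
    using pre_eq[of h n] by auto
  then show "pre n -` {h} \<inter> space M \<in> sets M" using ev_sets by simp
qed auto

lemma pre_sets: "{\<omega> \<in> space M. pre n \<omega> \<in> E} \<in> sets M"
  using measurable_sets[OF pre_meas, of E] by (simp add: vimage_def Int_def conj_commute)

lemma Q_pre: "length h = Suc n \<Longrightarrow> measure M {\<omega> \<in> space M. pre n \<omega> = h} = Q h"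
  unfolding Q_def by (rule arg_cong[where f="measure M"]) (use pre_eq[of h n] in auto)

lemma Q_snoc: assumes "h \<noteq> []" shows "Q (h @ [j]) = Q h * wstar_p (last h) j"
proof -
  obtain n where n: "length h = Suc n" using assms by (cases h) auto
  have "measure M {\<omega> \<in> space M. (\<forall>i\<le>n. W i \<omega> = h ! i) \<and> W (Suc n) \<omega> = j}
        = measure M {\<omega> \<in> space M. \<forall>i\<le>n. W i \<omega> = h ! i} * wstar_p (last h) j"
    using ch n unfolding is_wstar_chain_def by blast
  moreover have "{\<omega> \<in> space M. (\<forall>i\<le>n. W i \<omega> = h ! i) \<and> W (Suc n) \<omega> = j} =
     {\<omega> \<in> space M. \<forall>i<length (h@[j]). W i \<omega> = (h@[j])!i}"
  proof -
    have "(\<forall>i<length (h@[j]). W i \<omega> = (h@[j])!i) \<longleftrightarrow> (\<forall>i<length h. W i \<omega> = h!i) \<and> W (Suc n) \<omega> = j" for \<omega>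
      using n by (auto simp add: All_less_Suc nth_append)
    moreover have "(\<forall>i\<le>n. W i \<omega> = h ! i) \<longleftrightarrow> (\<forall>i<length h. W i \<omega> = h!i)" for \<omega>
      using n by (simp add: less_Suc_eq_le)
    ultimately show ?thesis by simp
  qed
  moreover have "{\<omega> \<in> space M. \<forall>i\<le>n. W i \<omega> = h ! i} = {\<omega> \<in> space M. \<forall>i<length h. W i \<omega> = h!i}"
    using n by (auto simp: less_Suc_eq_le)
  ultimately show ?thesis by (simp add: Q_def)
qed

lemma Q_single: "Q [x] = (if x = 0 then 1 else 0)"
proof -
  have P0: "measure M {\<omega> \<in> space M. W 0 \<omega> = 0} = 1"
    using conjunct1[OF conjunct2[OF conjunct2[OF ch[unfolded is_wstar_chain_def]]]] .
  have e: "Q [x] = measure M {\<omega> \<in> space M. W 0 \<omega> = x}" by (simp add: Q_def)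
  show ?thesis
  proof (cases "x = 0")
    case True then show ?thesis using e P0 by simp
  next
    case False
    define A where "A = {\<omega> \<in> space M. W 0 \<omega> = x}"
    define B where "B = {\<omega> \<in> space M. W 0 \<omega> = 0}"
    have s1: "A \<in> sets M" unfolding A_def by measurable
    have s0: "B \<in> sets M" unfolding B_def by measurable
    have "A \<inter> B = {}" using False unfolding A_def B_def by auto
    then have "measure M (A \<union> B) = measure M A + measure M B"
      using s0 s1 by (intro finite_measure_Union)
    moreover have "measure M (A \<union> B) \<le> 1" by (rule prob_le_1)
    moreover have "measure M A \<ge> 0" by (rule measure_nonneg)
    ultimately have "measure M A = 0" using P0 unfolding B_def by linarith
    then show ?thesis using e False unfolding A_def by simp
  qed
qed

lemma Q_valid: "Q h \<noteq> 0 \<Longrightarrow> h \<noteq> [] \<Longrightarrow> valid h"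
proof (induction h rule: rev_induct)
  case Nil
  then show ?case by simp
next
  case (snoc x h)
  show ?case
  proof (cases "h = []")
    case True then show ?thesis using snoc.prems Q_single[of x] by (simp add: valid_def split: if_splits)
  next
    case False
    then have q: "Q h \<noteq> 0" "wstar_p (last h) x \<noteq> 0" using snoc.prems Q_snoc by auto
    then have "valid h" using snoc.IH False by simp
    moreover have "x = last h + 1 \<or> (2 \<le> last h \<and> x + 1 = last h)"
      using q(2) by (auto simp: wstar_p_def split: if_splits)
    ultimately show ?thesis by (simp add: valid_snoc)
  qed
qed

lemma Q_valid': "Q h \<noteq> 0 \<Longrightarrow> length h = Suc n \<Longrightarrow> valid h"
  by (rule Q_valid) auto

lemma Q_zero_notSn: "length h = Suc n \<Longrightarrow> h \<notin> Sn n \<Longrightarrow> Q h = 0"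
  using Q_valid valid_in_Sn by fastforce

lemma Sn_Suc: "Sn (Suc n) = (\<lambda>(h,j). h @ [j]) ` ({h. set h \<subseteq> {..Suc n} \<and> length h = Suc n} \<times> {..Suc n})"
proof
  show "Sn (Suc n) \<subseteq> (\<lambda>(h,j). h @ [j]) ` ({h. set h \<subseteq> {..Suc n} \<and> length h = Suc n} \<times> {..Suc n})"
  proof
    fix h assume h: "h \<in> Sn (Suc n)"
    then have ne: "h \<noteq> []" by (auto simp: Sn_def)
    have e: "h = butlast h @ [last h]" using ne by simp
    have "last h \<in> set h" by (rule last_in_set[OF ne])
    moreover have "set h \<subseteq> {..Suc n}" using h by (simp add: Sn_def)
    ultimately have "last h \<in> {..Suc n}" by blast
    moreover have "set (butlast h) \<subseteq> {..Suc n}" "length (butlast h) = Suc n"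
      using h ne in_set_butlastD[of _ h] by (auto simp: Sn_def)
    ultimately have "set (butlast h) \<subseteq> {..Suc n}" "last h \<in> {..Suc n}" "length (butlast h) = Suc n" by auto
    then show "h \<in> (\<lambda>(h,j). h @ [j]) ` ({h. set h \<subseteq> {..Suc n} \<and> length h = Suc n} \<times> {..Suc n})"
      using e by (intro image_eqI[of _ _ "(butlast h, last h)"]) auto
  qed
qed (auto simp: Sn_def)

lemma Ex_step: "Ex (Suc n) F = Ex n (\<lambda>h. \<Sum>j\<le>Suc n. wstar_p (last h) j * F (h @ [j]))"
proof -
  let ?S' = "{h. set h \<subseteq> {..Suc n} \<and> length h = Suc n}"
  have fin: "finite ?S'" by (rule finite_lists_length_eq) simp
  have inj: "inj_on (\<lambda>(h,j). h @ [j]) (?S' \<times> {..Suc n})"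
    by (auto simp: inj_on_def)
  have "Ex (Suc n) F = (\<Sum>(h,j)\<in>?S' \<times> {..Suc n}. Q (h @ [j]) * F (h @ [j]))"
    unfolding Ex_def Sn_Suc by (subst sum.reindex[OF inj]) (simp add: case_prod_unfold)
  also have "\<dots> = (\<Sum>h\<in>?S'. \<Sum>j\<le>Suc n. Q (h @ [j]) * F (h @ [j]))"
    by (rule sum.cartesian_product[symmetric])
  also have "\<dots> = (\<Sum>h\<in>?S'. Q h * (\<Sum>j\<le>Suc n. wstar_p (last h) j * F (h @ [j])))"
  proof (rule sum.cong[OF refl])
    fix h assume "h \<in> ?S'"
    then have "h \<noteq> []" by auto
    then have "(\<Sum>j\<le>Suc n. Q (h @ [j]) * F (h @ [j])) = (\<Sum>j\<le>Suc n. Q h * (wstar_p (last h) j * F (h @ [j])))"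
      by (intro sum.cong) (simp_all add: Q_snoc)
    then show "(\<Sum>j\<le>Suc n. Q (h @ [j]) * F (h @ [j])) = Q h * (\<Sum>j\<le>Suc n. wstar_p (last h) j * F (h @ [j]))"
      by (simp only: sum_distrib_left)
  qed
  also have "\<dots> = (\<Sum>h\<in>Sn n. Q h * (\<Sum>j\<le>Suc n. wstar_p (last h) j * F (h @ [j])))"
  proof (rule sum.mono_neutral_right[OF fin])
    show "Sn n \<subseteq> ?S'" by (auto simp: Sn_def)
    show "\<forall>h\<in>?S' - Sn n. Q h * (\<Sum>j\<le>Suc n. wstar_p (last h) j * F (h @ [j])) = 0"
      using Q_zero_notSn by auto
  qed
  finally show ?thesis by (simp add: Ex_def)
qed

lemma Ex_zero: "Ex 0 F = F [0]"
proof -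
  have "Sn 0 = {[0]}" by (auto simp: Sn_def length_Suc_conv)
  then show ?thesis by (simp add: Ex_def Q_single)
qed

lemma Ex_cmult: "Ex n (\<lambda>h. c * F h) = c * Ex n F"
  by (simp add: Ex_def sum_distrib_left algebra_simps)

lemma Ex_add: "Ex n (\<lambda>h. F h + G h) = Ex n F + Ex n G"
  by (simp add: Ex_def sum.distrib algebra_simps)

lemma Ex_cong: "(\<And>h. valid h \<Longrightarrow> length h = Suc n \<Longrightarrow> F h = G h) \<Longrightarrow> Ex n F = Ex n G"
  unfolding Ex_def
proof (rule sum.cong[OF refl])
  fix h assume a: "\<And>h. valid h \<Longrightarrow> length h = Suc n \<Longrightarrow> F h = G h" and h: "h \<in> Sn n"
  show "Q h * F h = Q h * G h"
  proof (cases "Q h = 0")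
    case False
    moreover have "h \<noteq> []" using h by (auto simp: Sn_def)
    ultimately have "valid h" using Q_valid by blast
    then show ?thesis using a h by (auto simp: Sn_def)
  qed simp
qed

lemma Ex_mono: "(\<And>h. valid h \<Longrightarrow> length h = Suc n \<Longrightarrow> F h \<le> G h) \<Longrightarrow> Ex n F \<le> Ex n G"
  unfolding Ex_def
proof (rule sum_mono)
  fix h assume a: "\<And>h. valid h \<Longrightarrow> length h = Suc n \<Longrightarrow> F h \<le> G h" and h: "h \<in> Sn n"
  show "Q h * F h \<le> Q h * G h"
  proof (cases "Q h = 0")
    case False
    moreover have "h \<noteq> []" using h by (auto simp: Sn_def)
    ultimately have "valid h" using Q_valid by blast
    then show ?thesis using a h Q_nonneg by (auto simp: Sn_def intro: mult_left_mono)
  qed simp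
qed

lemma Ex_one: "Ex n (\<lambda>_. 1) = 1"
proof (induction n)
  case 0 then show ?case by (simp add: Ex_zero)
next
  case (Suc n)
  have "Ex (Suc n) (\<lambda>_. 1) = Ex n (\<lambda>h. \<Sum>j\<le>Suc n. wstar_p (last h) j * 1)" by (rule Ex_step)
  also have "\<dots> = Ex n (\<lambda>_. 1)"
    by (rule Ex_cong) (use valid_last wstar_p_rowsum in auto)
  finally show ?case using Suc by simp
qed

lemma Ex_const: "Ex n (\<lambda>_. c) = c"
  using Ex_cmult[of n c "\<lambda>_. 1"] Ex_one by simp

lemma prob_pre_finite: "finite A \<Longrightarrow> measure M {\<omega> \<in> space M. pre n \<omega> \<in> A} = (\<Sum>h\<in>A. measure M {\<omega> \<in> space M. pre n \<omega> = h})"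
proof -
  assume fA: "finite A"
  have "{\<omega> \<in> space M. pre n \<omega> \<in> A} = (\<Union>h\<in>A. {\<omega> \<in> space M. pre n \<omega> = h})" by auto
  moreover have "measure M (\<Union>h\<in>A. {\<omega> \<in> space M. pre n \<omega> = h}) = (\<Sum>h\<in>A. measure M {\<omega> \<in> space M. pre n \<omega> = h})"
    using fA by (intro measure_finite_Union) (auto simp: disjoint_family_on_def intro: pre_sets[of n "{_}", simplified])
  ultimately show ?thesis by simp
qed

lemma prob_Sn: "measure M {\<omega> \<in> space M. pre n \<omega> \<in> Sn n} = 1"
proof -
  have "measure M {\<omega> \<in> space M. pre n \<omega> \<in> Sn n} = (\<Sum>h\<in>Sn n. measure M {\<omega> \<in> space M. pre n \<omega> = h})"
    by (rule prob_pre_finite[OF finite_Sn])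
  also have "\<dots> = (\<Sum>h\<in>Sn n. Q h)"
    by (rule sum.cong[OF refl], rule Q_pre) (simp add: Sn_def)
  also have "\<dots> = Ex n (\<lambda>_. 1)" by (simp add: Ex_def)
  finally show ?thesis using Ex_one by simp
qed

lemma prob_pre: "measure M {\<omega> \<in> space M. pre n \<omega> \<in> E} = (\<Sum>h\<in>Sn n \<inter> E. Q h)"
proof -
  let ?A = "{\<omega> \<in> space M. pre n \<omega> \<in> Sn n \<inter> E}"
  let ?B = "{\<omega> \<in> space M. pre n \<omega> \<in> E - Sn n}"
  let ?C = "{\<omega> \<in> space M. pre n \<omega> \<in> - Sn n}"
  have "measure M ?C = 1 - measure M {\<omega> \<in> space M. pre n \<omega> \<in> Sn n}"
  proof -
    have "?C = space M - {\<omega> \<in> space M. pre n \<omega> \<in> Sn n}" by auto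
    then show ?thesis using prob_compl[OF pre_sets] by simp
  qed
  then have C0: "measure M ?C = 0" using prob_Sn by simp
  have "measure M ?B \<le> measure M ?C" by (intro finite_measure_mono pre_sets) auto
  then have B0: "measure M ?B = 0" using C0 measure_nonneg[of M ?B] by linarith
  have "{\<omega> \<in> space M. pre n \<omega> \<in> E} = ?A \<union> ?B" by auto
  then have "measure M {\<omega> \<in> space M. pre n \<omega> \<in> E} = measure M ?A + measure M ?B"
    by (simp add: finite_measure_Union pre_sets disjoint_iff)
  also have "measure M ?A = (\<Sum>h\<in>Sn n \<inter> E. measure M {\<omega> \<in> space M. pre n \<omega> = h})"
    using finite_Sn by (intro prob_pre_finite) auto
  also have "(\<Sum>h\<in>Sn n \<inter> E. measure M {\<omega> \<in> space M. pre n \<omega> = h}) = (\<Sum>h\<in>Sn n \<inter> E. Q h)"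
    by (rule sum.cong[OF refl], rule Q_pre) (simp add: Sn_def)
  finally show ?thesis using B0 by simp
qed

lemma markov:
  assumes nn: "\<And>h. valid h \<Longrightarrow> length h = Suc n \<Longrightarrow> F h \<ge> 0"
    and ge1: "\<And>h. valid h \<Longrightarrow> length h = Suc n \<Longrightarrow> h \<in> E \<Longrightarrow> F h \<ge> 1"
  shows "measure M {\<omega> \<in> space M. pre n \<omega> \<in> E} \<le> Ex n F"
proof -
  have "measure M {\<omega> \<in> space M. pre n \<omega> \<in> E} = (\<Sum>h\<in>Sn n \<inter> E. Q h)" by (rule prob_pre)
  also have "\<dots> \<le> (\<Sum>h\<in>Sn n \<inter> E. Q h * F h)"
  proof (rule sum_mono)
    fix h assume h: "h \<in> Sn n \<inter> E"
    show "Q h \<le> Q h * F h"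
    proof (cases "Q h = 0")
      case False
      moreover have "h \<noteq> []" using h by (auto simp: Sn_def)
    ultimately have "valid h" using Q_valid by blast
      then have "F h \<ge> 1" using ge1 h by (auto simp: Sn_def)
      then show ?thesis using Q_nonneg[of h] by (simp add: mult_le_cancel_left1)
    qed simp
  qed
  also have "\<dots> \<le> Ex n F" unfolding Ex_def
  proof (rule sum_mono2[OF finite_Sn])
    fix h assume h: "h \<in> Sn n - Sn n \<inter> E"
    show "0 \<le> Q h * F h"
    proof (cases "Q h = 0")
      case False
      moreover have "h \<noteq> []" using h by (auto simp: Sn_def)
    ultimately have "valid h" using Q_valid by blast
      then show ?thesis using nn h Q_nonneg by (auto simp: Sn_def)
    qed simp
  qed auto
  finally show ?thesis .
qed

lemma AE_valid: "AE \<omega> in M. \<forall>n. valid (pre n \<omega>)"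
proof (subst AE_all_countable, rule allI)
  fix n
  have "measure M {\<omega> \<in> space M. pre n \<omega> \<in> {h. valid h}} = (\<Sum>h\<in>Sn n \<inter> {h. valid h}. Q h)"
    by (rule prob_pre)
  also have "\<dots> = (\<Sum>h\<in>Sn n. Q h)"
    by (rule sum.mono_neutral_left[OF finite_Sn]) (use Q_valid' in \<open>auto simp: Sn_def\<close>)
  also have "\<dots> = 1" using Ex_one by (simp add: Ex_def)
  finally have "AE \<omega> in M. \<omega> \<in> {\<omega> \<in> space M. pre n \<omega> \<in> {h. valid h}}" by (intro AE_prob_1)
  then show "AE \<omega> in M. valid (pre n \<omega>)" by eventually_elim auto
qed

end


lemma wstar_sum_cong:
  fixes g g' :: "nat \<Rightarrow> real"
  assumes "k \<le> n" "k = 0 \<Longrightarrow> g 1 = g' 1" "k \<noteq> 0 \<Longrightarrow> g (k+1) = g' (k+1)" "k \<noteq> 0 \<Longrightarrow> k \<ge> 2 \<Longrightarrow> g (k-1) = g' (k-1)"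
  shows "(\<Sum>j\<le>Suc n. wstar_p k j * g j) = (\<Sum>j\<le>Suc n. wstar_p k j * g' j)"
  unfolding wstar_p_sum[OF assms(1)] using assms by (cases "k = 1") auto

definition Gh :: "nat \<Rightarrow> nat \<Rightarrow> nat list \<Rightarrow> real" where
  "Gh k j h = (if (\<exists>t s. t \<le> s \<and> s < length h \<and> k \<le> h!t \<and> h!s \<le> j) then 1
      else if (\<exists>t<length h. k \<le> h!t) then real j / real (last h) else real j / real k)"

lemma Gh_step:
  assumes v: "valid h" and j: "1 \<le> j" "j < k" and n: "last h \<le> n"
  shows "(\<Sum>x\<le>Suc n. wstar_p (last h) x * Gh k j (h @ [x])) = Gh k j h"
proof -
  define P where "P h \<longleftrightarrow> (\<exists>t s. t \<le> s \<and> s < length h \<and> k \<le> h!t \<and> h!s \<le> j)" for h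
  define H where "H h \<longleftrightarrow> (\<exists>t<length h. k \<le> h!t)" for h
  have G: "Gh k j h = (if P h then 1 else if H h then real j / real (last h) else real j / real k)" for h
    unfolding Gh_def P_def H_def by (rule refl)
  have ne: "h \<noteq> []" using v by (simp add: valid_def)
  let ?m = "last h"
  have lastnth: "h ! (length h - 1) = last h" using ne by (simp add: last_conv_nth)
  have Hs: "H (h @ [x]) \<longleftrightarrow> H h \<or> k \<le> x" for x
  proof
    assume "H (h @ [x])"
    then obtain t where "t < Suc (length h)" "k \<le> (h@[x])!t" by (auto simp: H_def)
    then show "H h \<or> k \<le> x" by (cases "t < length h") (auto simp: H_def nth_append less_Suc_eq)
  next
    assume a: "H h \<or> k \<le> x"
    show "H (h @ [x])"
    proof (cases "H h")
      case True
      then obtain t where "t < length h" "k \<le> h!t" by (auto simp: H_def)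
      then show ?thesis unfolding H_def by (intro exI[of _ t]) (simp add: nth_append)
    next
      case False
      then show ?thesis using a unfolding H_def by (intro exI[of _ "length h"]) auto
    qed
  qed
  have Ps: "P (h @ [x]) \<longleftrightarrow> P h \<or> (H h \<and> x \<le> j)" for x
  proof
    assume "P (h @ [x])"
    then obtain t s where ts: "t \<le> s" "s < Suc (length h)" "k \<le> (h@[x])!t" "(h@[x])!s \<le> j" by (auto simp: P_def)
    show "P h \<or> (H h \<and> x \<le> j)"
    proof (cases "s < length h")
      case True then show ?thesis using ts by (auto simp: P_def nth_append)
    next
      case False
      then have s: "s = length h" using ts by simp
      then have xj: "x \<le> j" using ts by simp
      show ?thesis
      proof (cases "t < length h")
        case True then show ?thesis using ts xj by (auto simp: H_def nth_append)
      next
        case False then have "t = length h" using ts s by simp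
        then show ?thesis using ts s j by simp
      qed
    qed
  next
    assume a: "P h \<or> (H h \<and> x \<le> j)"
    show "P (h @ [x])"
    proof (cases "P h")
      case True
      then obtain t s where "t \<le> s" "s < length h" "k \<le> h!t" "h!s \<le> j" by (auto simp: P_def)
      then show ?thesis unfolding P_def by (intro exI[of _ t] exI[of _ s]) (auto simp: nth_append)
    next
      case False
      then obtain t where "t < length h" "k \<le> h!t" "x \<le> j" using a by (auto simp: H_def)
      then show ?thesis unfolding P_def by (intro exI[of _ t] exI[of _ "length h"]) (auto simp: nth_append)
    qed
  qed
  have row: "(\<Sum>x\<le>Suc n. wstar_p ?m x) = 1" using wstar_p_rowsum[OF n] .
  show ?thesis
  proof (cases "P h")
    case True
    then have "(\<Sum>x\<le>Suc n. wstar_p ?m x * Gh k j (h @ [x])) = (\<Sum>x\<le>Suc n. wstar_p ?m x)"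
      by (simp add: G Ps)
    then show ?thesis using True row by (simp add: G)
  next
    case nP: False
    show ?thesis
    proof (cases "H h")
      case True
      then obtain t where t: "t < length h" "k \<le> h!t" by (auto simp: H_def)
      have mj: "?m > j"
      proof (rule ccontr)
        assume "\<not> ?m > j"
        then have "P h" unfolding P_def using t lastnth
          by (intro exI[of _ t] exI[of _ "length h - 1"]) auto
        then show False using nP by simp
      qed
      have m0: "?m \<noteq> 0" using mj by simp
      have "(\<Sum>x\<le>Suc n. wstar_p ?m x * Gh k j (h @ [x])) = (\<Sum>x\<le>Suc n. wstar_p ?m x * (real j / real x))"
        using n mj m0 by (intro wstar_sum_cong) (auto simp: G Ps Hs True nP)
      also have "\<dots> = real j / real ?m"
      proof -
        have q1: "real ?m > 0" "real (?m + 1) > 0" using m0 by auto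
        have a1: "real (?m+1)/(2*real ?m) * (real j / real (?m+1)) = real j/(2*real ?m)"
          using q1 by (simp only: field_simps) simp
        have pos: "real (?m - 1) > 0" using mj j by simp
        have a2: "real (?m-1)/(2*real ?m) * (real j / real (?m-1)) = real j/(2*real ?m)"
          using pos by (simp add: field_simps)
        have "(\<Sum>x\<le>Suc n. wstar_p ?m x * (real j / real x)) =
          real (?m+1)/(2*real ?m) * (real j / real (?m+1)) + real (?m-1)/(2*real ?m) * (real j / real (?m-1))"
          unfolding wstar_p_sum[OF n] using m0 by (simp only: if_False)
        also have "\<dots> = real j/(2*real ?m) + real j/(2*real ?m)" by (simp only: a1 a2)
        also have "\<dots> = real j / real ?m" by simp
        finally show ?thesis .
      qed
      finally show ?thesis using True nP by (simp add: G)
    next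
      case nH: False
      have mk: "?m < k" using nH ne lastnth by (auto simp: H_def) (metis diff_less length_greater_0_conv lessI not_le)
      have "(\<Sum>x\<le>Suc n. wstar_p ?m x * Gh k j (h @ [x])) = (\<Sum>x\<le>Suc n. wstar_p ?m x * (real j / real k))"
        using n mk j by (intro wstar_sum_cong) (auto simp: G Ps Hs nH nP)
      also have "\<dots> = (\<Sum>x\<le>Suc n. wstar_p ?m x) * (real j / real k)" by (rule sum_distrib_right[symmetric])
      also have "\<dots> = real j / real k" using row by simp
      finally show ?thesis using nH nP by (simp add: G)
    qed
  qed
qed

lemma Gh_nonneg: "Gh k j h \<ge> 0"
  by (simp add: Gh_def)

context wchain
begin

lemma pre_last: "last (pre n \<omega>) = W n \<omega>"
proof -
  have "pre n \<omega> \<noteq> []" using pre_length[of n \<omega>] by (metis list.size(3) nat.distinct(1))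
  then show ?thesis by (simp add: last_conv_nth)
qed

lemma pre_E: "(pre n \<omega> \<in> {h. \<exists>t s. t \<le> s \<and> s < length h \<and> k \<le> h!t \<and> h!s \<le> j}) \<longleftrightarrow>
   (\<exists>t s. t \<le> s \<and> s \<le> n \<and> k \<le> W t \<omega> \<and> W s \<omega> \<le> j)"
proof
  assume "pre n \<omega> \<in> {h. \<exists>t s. t \<le> s \<and> s < length h \<and> k \<le> h!t \<and> h!s \<le> j}"
  then obtain t s where ts: "t \<le> s" "s < Suc n" "k \<le> pre n \<omega> ! t" "pre n \<omega> ! s \<le> j" by auto
  then have "t \<le> n" "s \<le> n" by auto
  then show "\<exists>t s. t \<le> s \<and> s \<le> n \<and> k \<le> W t \<omega> \<and> W s \<omega> \<le> j" using ts by (intro exI[of _ t] exI[of _ s]) simp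
next
  assume "\<exists>t s. t \<le> s \<and> s \<le> n \<and> k \<le> W t \<omega> \<and> W s \<omega> \<le> j"
  then obtain t s where ts: "t \<le> s" "s \<le> n" "k \<le> W t \<omega>" "W s \<omega> \<le> j" by auto
  then have "t \<le> n" by simp
  then show "pre n \<omega> \<in> {h. \<exists>t s. t \<le> s \<and> s < length h \<and> k \<le> h!t \<and> h!s \<le> j}"
    using ts by (intro CollectI exI[of _ t] exI[of _ s]) simp
qed

lemma Ex_Gh: assumes "1 \<le> j" "j < k" shows "Ex n (Gh k j) = real j / real k"
proof (induction n)
  case 0
  have "\<not> k \<le> 0" using assms by simp
  then show ?case by (simp add: Ex_zero Gh_def)
next
  case (Suc n)
  have "Ex (Suc n) (Gh k j) = Ex n (\<lambda>h. \<Sum>x\<le>Suc n. wstar_p (last h) x * Gh k j (h @ [x]))" by (rule Ex_step)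
  also have "\<dots> = Ex n (Gh k j)"
    by (rule Ex_cong) (use Gh_step assms valid_last in auto)
  finally show ?case using Suc by simp
qed

lemma prob_hit_n:
  assumes "1 \<le> j" "j < k"
  shows "measure M {\<omega> \<in> space M. \<exists>t s. t \<le> s \<and> s \<le> n \<and> k \<le> W t \<omega> \<and> W s \<omega> \<le> j} \<le> real j / real k"
proof -
  let ?E = "{h. \<exists>t s. t \<le> s \<and> s < length h \<and> k \<le> h!t \<and> h!s \<le> j}"
  have "{\<omega> \<in> space M. \<exists>t s. t \<le> s \<and> s \<le> n \<and> k \<le> W t \<omega> \<and> W s \<omega> \<le> j} = {\<omega> \<in> space M. pre n \<omega> \<in> ?E}"
    using pre_E by blast
  also have "measure M \<dots> \<le> Ex n (Gh k j)"
    by (rule markov) (auto simp: Gh_nonneg Gh_def)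
  finally show ?thesis using Ex_Gh[OF assms] by simp
qed

lemma prob_hit:
  assumes "1 \<le> j" "j < k"
  shows "measure M {\<omega> \<in> space M. \<exists>t s. t \<le> s \<and> k \<le> W t \<omega> \<and> W s \<omega> \<le> j} \<le> real j / real k"
proof -
  define A where "A n = {\<omega> \<in> space M. \<exists>t s. t \<le> s \<and> s \<le> n \<and> k \<le> W t \<omega> \<and> W s \<omega> \<le> j}" for n
  have As: "A n \<in> sets M" for n
  proof -
    have "A n = {\<omega> \<in> space M. pre n \<omega> \<in> {h. \<exists>t s. t \<le> s \<and> s < length h \<and> k \<le> h!t \<and> h!s \<le> j}}"
      unfolding A_def using pre_E by blast
    then show ?thesis using pre_sets by simp
  qed
  have inc: "incseq A" unfolding incseq_def A_def by auto (meson order_trans)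
  have U: "(\<Union>n. A n) = {\<omega> \<in> space M. \<exists>t s. t \<le> s \<and> k \<le> W t \<omega> \<and> W s \<omega> \<le> j}"
    unfolding A_def by auto
  have "(\<lambda>n. measure M (A n)) \<longlonglongrightarrow> measure M (\<Union>n. A n)"
    using As inc by (intro finite_Lim_measure_incseq) auto
  moreover have "measure M (A n) \<le> real j / real k" for n
    unfolding A_def by (rule prob_hit_n[OF assms])
  ultimately have "measure M (\<Union>n. A n) \<le> real j / real k"
    by (intro LIMSEQ_le_const2) auto
  then show ?thesis using U by simp
qed

lemma hit_sets: "{\<omega> \<in> space M. \<exists>t s. t \<le> s \<and> k \<le> W t \<omega> \<and> W s \<omega> \<le> j} \<in> sets M"
proof -
  have "{\<omega> \<in> space M. \<exists>t s. t \<le> s \<and> k \<le> W t \<omega> \<and> W s \<omega> \<le> j}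
     = (\<Union>n. {\<omega> \<in> space M. pre n \<omega> \<in> {h. \<exists>t s. t \<le> s \<and> s < length h \<and> k \<le> h!t \<and> h!s \<le> j}})"
  proof (intro equalityI subsetI)
    fix \<omega> assume "\<omega> \<in> {\<omega> \<in> space M. \<exists>t s. t \<le> s \<and> k \<le> W t \<omega> \<and> W s \<omega> \<le> j}"
    then obtain t s where "\<omega> \<in> space M" "t \<le> s" "k \<le> W t \<omega>" "W s \<omega> \<le> j" by auto
    then show "\<omega> \<in> (\<Union>n. {\<omega> \<in> space M. pre n \<omega> \<in> {h. \<exists>t s. t \<le> s \<and> s < length h \<and> k \<le> h!t \<and> h!s \<le> j}})"
      unfolding pre_E by (intro UN_I[of s]) auto
  qed (auto simp only: pre_E)
  then show ?thesis using pre_sets by auto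
qed

end


definition Gx :: "nat \<Rightarrow> nat list \<Rightarrow> real" where
  "Gx b h = (if (\<exists>i<length h. b \<le> h!i) then (- ((real b)^2)) else 3 * real (length h - 1) - (real (last h))^2)"

lemma Gx_step:
  assumes v: "valid h" and len: "length h = Suc n" and n: "1 \<le> n" and b: "1 \<le> b"
  shows "(\<Sum>x\<le>Suc n. wstar_p (last h) x * Gx b (h @ [x])) \<le> Gx b h"
proof -
  define H where "H h \<longleftrightarrow> (\<exists>i<length h. b \<le> h!i)" for h
  have G: "Gx b h = (if H h then (- ((real b)^2)) else 3 * real (length h - 1) - (real (last h))^2)" for h
    unfolding Gx_def H_def by (rule refl)
  have ne: "h \<noteq> []" using v by (simp add: valid_def)
  let ?m = "last h"
  have mn: "?m \<le> n" "1 \<le> ?m" using valid_last[OF v len] n by auto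
  have lastnth: "h ! (length h - 1) = last h" using ne by (simp add: last_conv_nth)
  have Hs: "H (h @ [x]) \<longleftrightarrow> H h \<or> b \<le> x" for x
  proof
    assume "H (h @ [x])"
    then obtain t where "t < Suc (length h)" "b \<le> (h@[x])!t" by (auto simp: H_def)
    then show "H h \<or> b \<le> x" by (cases "t < length h") (auto simp: H_def nth_append less_Suc_eq)
  next
    assume a: "H h \<or> b \<le> x"
    show "H (h @ [x])"
    proof (cases "H h")
      case True
      then obtain t where "t < length h" "b \<le> h!t" by (auto simp: H_def)
      then show ?thesis unfolding H_def by (intro exI[of _ t]) (simp add: nth_append)
    next
      case False
      then show ?thesis using a unfolding H_def by (intro exI[of _ "length h"]) auto
    qed
  qed
  have row: "(\<Sum>x\<le>Suc n. wstar_p ?m x) = 1" using wstar_p_rowsum[OF mn(1)] .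
  show ?thesis
  proof (cases "H h")
    case True
    have "(\<Sum>x\<le>Suc n. wstar_p ?m x * Gx b (h @ [x])) = (\<Sum>x\<le>Suc n. wstar_p ?m x * (- ((real b)^2)))"
      by (intro sum.cong refl) (simp add: G Hs True)
    also have "\<dots> = (\<Sum>x\<le>Suc n. wstar_p ?m x) * ((- ((real b)^2)))"
      by (rule sum_distrib_right[symmetric])
    finally have "(\<Sum>x\<le>Suc n. wstar_p ?m x * Gx b (h @ [x])) = (\<Sum>x\<le>Suc n. wstar_p ?m x) * ((- ((real b)^2)))" .
    then show ?thesis using True row by (simp add: G)
  next
    case False
    have mb: "?m < b" using False lastnth ne unfolding H_def
      by (metis diff_less length_greater_0_conv not_le zero_less_one)
    have m0: "?m \<noteq> 0" using mn by simp
    define g where "g x = 3 * real (Suc n) - (real x)^2" for x :: nat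
    have le1: "Gx b (h @ [?m+1]) \<le> g (?m+1)"
    proof (cases "b \<le> ?m + 1")
      case True
      then have bm: "b = ?m + 1" using mb by simp
      have "Gx b (h @ [?m+1]) = - ((real b)^2)" using True by (simp add: G Hs)
      also have "\<dots> \<le> 3 * real (Suc n) - (real b)^2" by simp
      also have "\<dots> = g (?m+1)" using bm by (simp add: g_def)
      finally show ?thesis .
    next
      case nb: False
      then show ?thesis using False by (simp add: G Hs g_def len)
    qed
    have le2: "Gx b (h @ [?m-1]) \<le> g (?m-1)"
      using mb False by (auto simp: G Hs g_def len)
    have c1: "real (?m+1)/(2*real ?m) \<ge> 0" "real (?m-1)/(2*real ?m) \<ge> 0" by auto
    have "(\<Sum>x\<le>Suc n. wstar_p ?m x * Gx b (h @ [x])) =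
       real (?m+1)/(2*real ?m) * Gx b (h @ [?m+1]) + real (?m-1)/(2*real ?m) * Gx b (h @ [?m-1])"
      unfolding wstar_p_sum[OF mn(1)] using m0 by (simp only: if_False)
    also have "\<dots> \<le> real (?m+1)/(2*real ?m) * g (?m+1) + real (?m-1)/(2*real ?m) * g (?m-1)"
      by (intro add_mono mult_left_mono le1 le2 c1)
    also have "\<dots> = 3 * real n - (real ?m)^2"
    proof -
      have r: "real (?m - 1) = real ?m - 1" using mn by (simp add: of_nat_diff)
      have "real ?m > 0" using m0 by simp
      then show ?thesis unfolding g_def r by (simp add: field_simps power2_eq_square)
    qed
    also have "\<dots> = Gx b h" using False len by (simp add: G)
    finally show ?thesis .
  qed
qed

lemma cancel_aux: "(x::real) \<noteq> 0 \<Longrightarrow> x / y * (s / x) = s / y"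
  by (simp add: field_simps)

definition Fs :: "real \<Rightarrow> nat list \<Rightarrow> real" where
  "Fs \<theta> h = sinh (\<theta> * real (last h)) / real (last h)"

lemma Fs_step:
  assumes mn: "1 \<le> last h" "last h \<le> n"
  shows "(\<Sum>x\<le>Suc n. wstar_p (last h) x * Fs \<theta> (h @ [x])) = cosh \<theta> * Fs \<theta> h"
proof -
  let ?m = "last h"
  have m0: "?m \<noteq> 0" using mn by simp
  have mp: "real ?m > 0" using m0 by simp
  have a1: "real (?m+1)/(2*real ?m) * Fs \<theta> (h @ [?m+1]) = sinh (\<theta> * real ?m + \<theta>) / (2 * real ?m)"
  proof -
    have nz: "real (?m+1) \<noteq> 0" by (simp only: of_nat_eq_0_iff)
    have "real (?m+1)/(2*real ?m) * Fs \<theta> (h @ [?m+1]) = real (?m+1)/(2*real ?m) * (sinh (\<theta> * real (?m+1)) / real (?m+1))"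
      by (simp only: Fs_def last_snoc)
    also have "\<dots> = sinh (\<theta> * real (?m+1)) / (2 * real ?m)" by (rule cancel_aux[OF nz])
    also have "\<theta> * real (?m+1) = \<theta> * real ?m + \<theta>" by (simp add: algebra_simps)
    finally show ?thesis .
  qed
  have a2: "real (?m-1)/(2*real ?m) * Fs \<theta> (h @ [?m-1]) = sinh (\<theta> * real ?m - \<theta>) / (2 * real ?m)"
  proof (cases "?m = 1")
    case True then show ?thesis by (simp add: Fs_def)
  next
    case False
    then have r: "real (?m - 1) = real ?m - 1" "real ?m - 1 > 0" using mn by (auto simp: of_nat_diff)
    then show ?thesis using mp by (simp add: Fs_def field_simps r)
  qed
  have "(\<Sum>x\<le>Suc n. wstar_p ?m x * Fs \<theta> (h @ [x])) =
       real (?m+1)/(2*real ?m) * Fs \<theta> (h @ [?m+1]) + real (?m-1)/(2*real ?m) * Fs \<theta> (h @ [?m-1])"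
    unfolding wstar_p_sum[OF mn(2)] using m0 by (simp only: if_False)
  also have "\<dots> = (sinh (\<theta> * real ?m + \<theta>) + sinh (\<theta> * real ?m - \<theta>)) / (2 * real ?m)"
    unfolding a1 a2 by (simp add: add_divide_distrib)
  also have "\<dots> = cosh \<theta> * Fs \<theta> h"
    unfolding sinh_add sinh_diff Fs_def using mp by (simp add: field_simps)
  finally show ?thesis .
qed

context wchain
begin

lemma Ex_Gx: assumes b: "2 \<le> b" shows "Ex (Suc n) (Gx b) \<le> 2"
proof (induction n)
  case 0
  have "Ex (Suc 0) (Gx b) = Ex 0 (\<lambda>h. \<Sum>x\<le>Suc 0. wstar_p (last h) x * Gx b (h @ [x]))" by (rule Ex_step)
  also have "\<dots> = (\<Sum>x\<le>Suc 0. wstar_p 0 x * Gx b ([0] @ [x]))" by (simp add: Ex_zero)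
  also have "\<dots> = Gx b [0, 1]" using wstar_p_sum[of 0 0 "\<lambda>x. Gx b ([0] @ [x])"] by simp
  also have "\<dots> = 2"
  proof -
    have "\<forall>i<Suc (Suc 0). [0,1::nat]!i \<le> 1" by (simp add: All_less_Suc)
    then have "\<not> (\<exists>i<length [0,1::nat]. b \<le> [0,1::nat]!i)" using b by force
    then have "Gx b [0,1] = 3 * real (length [0,1::nat] - 1) - (real (last [0,1::nat]))^2"
      unfolding Gx_def by (rule if_not_P)
    then show ?thesis by simp
  qed
  finally show ?case by simp
next
  case (Suc n)
  have "Ex (Suc (Suc n)) (Gx b) = Ex (Suc n) (\<lambda>h. \<Sum>x\<le>Suc (Suc n). wstar_p (last h) x * Gx b (h @ [x]))" by (rule Ex_step)
  also have "\<dots> \<le> Ex (Suc n) (Gx b)"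
  proof (rule Ex_mono)
    fix h assume v: "valid h" and len: "length h = Suc (Suc n)"
    show "(\<Sum>x\<le>Suc (Suc n). wstar_p (last h) x * Gx b (h @ [x])) \<le> Gx b h"
      by (rule Gx_step[OF v len]) (use b in auto)
  qed
  finally show ?case using Suc by simp
qed

lemma prob_exit:
  assumes b: "2 \<le> b" and n: "1 \<le> n"
  shows "measure M {\<omega> \<in> space M. \<forall>s\<le>n. W s \<omega> < b} \<le> (2 + (real b)^2) / (3 * real n)"
proof -
  let ?E = "{h. \<forall>i<length h. h!i < b}"
  define F where "F h = (Gx b h + (real b)^2) / (3 * real n)" for h
  have np: "real n > 0" using n by simp
  have "{\<omega> \<in> space M. \<forall>s\<le>n. W s \<omega> < b} = {\<omega> \<in> space M. pre n \<omega> \<in> ?E}"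
    by (auto simp: less_Suc_eq_le)
  also have "measure M \<dots> \<le> Ex n F"
  proof (rule markov)
    fix h assume v: "valid h" and len: "length h = Suc n"
    have ne: "h \<noteq> []" using len by auto
    have lastnth: "h ! (length h - 1) = last h" using ne by (simp add: last_conv_nth)
    show "F h \<ge> 0"
    proof (cases "\<exists>i<length h. b \<le> h!i")
      case True then show ?thesis by (simp add: F_def Gx_def)
    next
      case False
      moreover have "h ! n = last h" "n < length h" using lastnth len by auto
      ultimately have "last h < b" by (metis not_le)
      then have "(real (last h))^2 \<le> (real b)^2" by (simp add: power_mono)
      moreover have "0 \<le> 3 * real (length h - 1)" by simp
      ultimately have "0 \<le> 3 * real (length h - 1) - (real (last h))^2 + (real b)^2" by linarith
      then show ?thesis using False np unfolding F_def Gx_def by simp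
    qed
    assume "h \<in> ?E"
    then have nH: "\<not> (\<exists>i<length h. b \<le> h!i)" by auto
    moreover have "h ! n = last h" "n < length h" using lastnth len by auto
    ultimately have "last h < b" by (metis not_le)
    then have "(real (last h))^2 \<le> (real b)^2" by (simp add: power_mono)
    moreover have "real (length h - 1) = real n" using len by simp
    ultimately have ge: "3 * real n \<le> 3 * real (length h - 1) - (real (last h))^2 + (real b)^2" by linarith
    have "F h = (3 * real (length h - 1) - (real (last h))^2 + (real b)^2) / (3 * real n)"
      unfolding F_def Gx_def using nH by (simp only: if_False)
    then show "F h \<ge> 1" using ge np by simp
  qed
  also have "Ex n F = (Ex n (Gx b) + (real b)^2) / (3 * real n)"
  proof -
    have "F = (\<lambda>h. (1 / (3 * real n)) * (Gx b h + (real b)^2))" by (rule ext) (simp add: F_def)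
    then have "Ex n F = (1 / (3 * real n)) * Ex n (\<lambda>h. Gx b h + (real b)^2)" by (simp only: Ex_cmult)
    also have "\<dots> = (1 / (3 * real n)) * (Ex n (Gx b) + (real b)^2)" by (simp only: Ex_add Ex_const)
    finally show ?thesis by simp
  qed
  also have "\<dots> \<le> (2 + (real b)^2) / (3 * real n)"
  proof -
    obtain n' where "n = Suc n'" using n by (cases n) auto
    then have "Ex n (Gx b) \<le> 2" using Ex_Gx[OF b] by simp
    then show ?thesis using np by (simp add: divide_right_mono)
  qed
  finally show ?thesis .
qed

lemma Ex_Fs: "Ex (Suc n) (Fs \<theta>) = sinh \<theta> * cosh \<theta> ^ n"
proof (induction n)
  case 0
  have "Ex (Suc 0) (Fs \<theta>) = Ex 0 (\<lambda>h. \<Sum>x\<le>Suc 0. wstar_p (last h) x * Fs \<theta> (h @ [x]))" by (rule Ex_step)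
  also have "\<dots> = (\<Sum>x\<le>Suc 0. wstar_p 0 x * Fs \<theta> ([0] @ [x]))" by (simp add: Ex_zero)
  also have "\<dots> = Fs \<theta> [0, 1]" using wstar_p_sum[of 0 0 "\<lambda>x. Fs \<theta> ([0] @ [x])"] by simp
  also have "\<dots> = sinh \<theta>" by (simp add: Fs_def)
  finally show ?case by simp
next
  case (Suc n)
  have "Ex (Suc (Suc n)) (Fs \<theta>) = Ex (Suc n) (\<lambda>h. \<Sum>x\<le>Suc (Suc n). wstar_p (last h) x * Fs \<theta> (h @ [x]))" by (rule Ex_step)
  also have "\<dots> = Ex (Suc n) (\<lambda>h. cosh \<theta> * Fs \<theta> h)"
  proof (rule Ex_cong)
    fix h assume v: "valid h" and len: "length h = Suc (Suc n)"
    have "1 \<le> last h" "last h \<le> Suc n" using valid_last[OF v len] by auto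
    then show "(\<Sum>x\<le>Suc (Suc n). wstar_p (last h) x * Fs \<theta> (h @ [x])) = cosh \<theta> * Fs \<theta> h"
      by (rule Fs_step)
  qed
  also have "\<dots> = cosh \<theta> * Ex (Suc n) (Fs \<theta>)" by (rule Ex_cmult)
  finally show ?case using Suc by simp
qed

lemma prob_upper:
  assumes th: "\<theta> > 0" and a: "a > 0" and n: "1 \<le> n"
  shows "measure M {\<omega> \<in> space M. a \<le> real (W n \<omega>)} \<le> real n * sinh \<theta> * cosh \<theta> ^ (n - 1) / sinh (\<theta> * a)"
proof -
  let ?E = "{h. a \<le> real (last h)}"
  have sp: "sinh (\<theta> * a) > 0" using th a by simp
  define F where "F h = Fs \<theta> h * real n / sinh (\<theta> * a)" for h
  have np: "real n > 0" using n by simp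
  have "{\<omega> \<in> space M. a \<le> real (W n \<omega>)} = {\<omega> \<in> space M. pre n \<omega> \<in> ?E}"
    by (simp add: pre_last)
  also have "measure M \<dots> \<le> Ex n F"
  proof (rule markov)
    fix h assume v: "valid h" and len: "length h = Suc n"
    have l: "1 \<le> last h" "last h \<le> n" using valid_last[OF v len] n by auto
    then have lp: "real (last h) > 0" by simp
    show "F h \<ge> 0" using th lp sp np by (simp add: F_def Fs_def)
    assume "h \<in> ?E"
    then have al: "a \<le> real (last h)" by simp
    have s1: "sinh (\<theta> * a) \<le> sinh (\<theta> * real (last h))" using al th by (simp add: mult_left_mono)
    have s2: "real (last h) \<le> real n" using l by simp
    have "sinh (\<theta> * a) * real (last h) \<le> sinh (\<theta> * real (last h)) * real n"
      using s1 s2 sp lp by (intro mult_mono) auto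
    then show "F h \<ge> 1" using sp lp by (simp add: F_def Fs_def field_simps)
  qed
  also have "Ex n F = real n * Ex n (Fs \<theta>) / sinh (\<theta> * a)"
    unfolding F_def using Ex_cmult[of n "real n / sinh (\<theta> * a)" "Fs \<theta>"]
    by (simp add: mult.commute)
  also have "\<dots> = real n * sinh \<theta> * cosh \<theta> ^ (n - 1) / sinh (\<theta> * a)"
  proof -
    obtain n' where "n = Suc n'" using n by (cases n) auto
    then show ?thesis using Ex_Fs by simp
  qed
  finally show ?thesis .
qed

end


lemma summable_O2: fixes f :: "nat \<Rightarrow> real" assumes "f \<in> O(\<lambda>n. 1 / real n ^ 2)" shows "summable f"
proof (rule summable_comparison_test_bigo[OF _ assms])
  have "summable (\<lambda>n. inverse (real n ^ 2))" by (rule inverse_power_summable) simp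
  then show "summable (\<lambda>n. norm (1 / real n ^ 2))" by (simp add: inverse_eq_divide)
qed

lemma summable_geo_powr: assumes "(\<epsilon>::real) > 0" shows "summable (\<lambda>i::nat. 2 powr (- (real i * \<epsilon>)))"
  by (rule summable_O2) (use assms in real_asymp)

lemma summable_upper_bound: assumes "(\<epsilon>::real) > 0"
  shows "summable (\<lambda>n::nat. real n * sinh(1/sqrt n) * exp(real n * ln(cosh(1/sqrt n))) / sinh(real n powr \<epsilon>))"
  by (rule summable_O2) (use assms in real_asymp)

context wchain
begin

lemma BC:
  assumes "\<And>n. A n \<in> sets M" and "\<And>n. n \<ge> N \<Longrightarrow> measure M (A n) \<le> B n" and "summable B"
  shows "AE \<omega> in M. eventually (\<lambda>n. \<omega> \<notin> A n) sequentially"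
proof -
  have "summable (\<lambda>n. measure M (A n))"
    by (rule summable_comparison_test'[OF assms(3), of N]) (use assms(2) in auto)
  then have "AE \<omega> in M. eventually (\<lambda>n. \<omega> \<in> space M - A n) sequentially"
    using assms(1) by (intro borel_cantelli_AE1) (auto simp: emeasure_eq_measure)
  then show ?thesis by eventually_elim (auto elim: eventually_mono)
qed

lemma W_sets: "{\<omega> \<in> space M. P (W n \<omega>)} \<in> sets M"
  using pre_sets[of n "{h. P (last h)}"] by (simp add: pre_last)

lemma AE_upper1:
  assumes \<epsilon>: "\<epsilon> > 0"
  shows "AE \<omega> in M. eventually (\<lambda>n. real (W n \<omega>) < real n powr (1/2 + \<epsilon>)) sequentially"
proof -
  define A where "A n = {\<omega> \<in> space M. real n powr (1/2 + \<epsilon>) \<le> real (W n \<omega>)}" for n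
  define B where "B n = real n * sinh(1/sqrt n) * exp(real n * ln(cosh(1/sqrt n))) / sinh(real n powr \<epsilon>)" for n :: nat
  have "AE \<omega> in M. eventually (\<lambda>n. \<omega> \<notin> A n) sequentially"
  proof (rule BC[of A 1 B])
    show "A n \<in> sets M" for n unfolding A_def by (rule W_sets)
    show "summable B" unfolding B_def by (rule summable_upper_bound[OF \<epsilon>])
    fix n :: nat assume n: "n \<ge> 1"
    have np: "real n > 0" using n by simp
    define \<theta> where "\<theta> = 1 / sqrt (real n)"
    define a where "a = real n powr (1/2 + \<epsilon>)"
    have thp: "\<theta> > 0" using np by (simp add: \<theta>_def)
    have ap: "a > 0" using np by (simp add: a_def)
    have tha: "\<theta> * a = real n powr \<epsilon>"
    proof -
      have "sqrt (real n) = real n powr (1/2)" using np by (simp add: powr_half_sqrt)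
      then have "\<theta> * a = real n powr (1/2 + \<epsilon>) / real n powr (1/2)" by (simp add: \<theta>_def a_def)
      also have "\<dots> = real n powr \<epsilon>" by (simp add: powr_add)
      finally show ?thesis .
    qed
    have "measure M (A n) \<le> real n * sinh \<theta> * cosh \<theta> ^ (n - 1) / sinh (\<theta> * a)"
      unfolding A_def a_def[symmetric] by (rule prob_upper[OF thp ap n])
    also have "\<dots> \<le> real n * sinh \<theta> * cosh \<theta> ^ n / sinh (\<theta> * a)"
    proof -
      have c1: "cosh \<theta> \<ge> 1" by (rule cosh_real_ge_1)
      have "cosh \<theta> ^ (n - 1) \<le> cosh \<theta> ^ n" using c1 by (intro power_increasing) auto
      moreover have "real n * sinh \<theta> / sinh (\<theta> * a) \<ge> 0" using thp ap np by simp
      ultimately show ?thesis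
        using mult_left_mono[of "cosh \<theta> ^ (n - 1)" "cosh \<theta> ^ n" "real n * sinh \<theta> / sinh (\<theta> * a)"]
        by (simp add: field_simps)
    qed
    also have "\<dots> = B n"
    proof -
      have "cosh \<theta> > 0" using cosh_real_ge_1[of \<theta>] by linarith
      then have e: "exp (real n * ln (cosh \<theta>)) = cosh \<theta> ^ n" by (simp add: exp_of_nat_mult)
      show ?thesis unfolding B_def \<theta>_def[symmetric] tha[symmetric] e ..
    qed
    finally show "measure M (A n) \<le> B n" .
  qed
  with AE_space show ?thesis by eventually_elim (auto simp: A_def elim!: eventually_mono)
qed

lemma AE_hit1:
  assumes \<epsilon>: "\<epsilon> > 0" "\<epsilon> < 1"
  shows "AE \<omega> in M. eventually (\<lambda>i. \<forall>t s. t \<le> s \<longrightarrow> 2^i \<le> W t \<omega> \<longrightarrow> 2 powr (real i * (1 - \<epsilon>)) < real (W s \<omega>)) sequentially"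
proof -
  define x where "x i = (2::real) powr (real i * (1 - \<epsilon>))" for i :: nat
  define j where "j i = nat \<lfloor>x i\<rfloor>" for i
  define A where "A i = {\<omega> \<in> space M. \<exists>t s. t \<le> s \<and> 2^i \<le> W t \<omega> \<and> W s \<omega> \<le> j i}" for i
  have x1: "x i \<ge> 1" for i unfolding x_def using \<epsilon> by (intro ge_one_powr_ge_zero) auto
  have jx: "real (j i) \<le> x i" "x i < real (j i) + 1" for i
    using x1[of i] unfolding j_def by (auto simp: of_nat_nat)
  have "AE \<omega> in M. eventually (\<lambda>i. \<omega> \<notin> A i) sequentially"
  proof (rule BC[of A 1 "\<lambda>i. 2 powr (- (real i * \<epsilon>))"])
    show "A i \<in> sets M" for i unfolding A_def by (rule hit_sets)
    show "summable (\<lambda>i::nat. 2 powr (- (real i * \<epsilon>)))" by (rule summable_geo_powr[OF \<epsilon>(1)])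
    fix i :: nat assume i: "i \<ge> 1"
    have "1 \<le> \<lfloor>x i\<rfloor>" using x1[of i] by (simp add: le_floor_iff)
    then have j1: "1 \<le> j i" unfolding j_def by linarith
    have "x i < 2 powr real i" unfolding x_def using i \<epsilon> by (intro powr_less_mono) auto
    also have "\<dots> = 2 ^ i" by (simp add: powr_realpow)
    finally have "real (j i) < 2 ^ i" using jx(1)[of i] by linarith
    then have jk: "j i < 2 ^ i" by (metis of_nat_less_iff of_nat_numeral of_nat_power)
    have "measure M (A i) \<le> real (j i) / real (2 ^ i)" unfolding A_def by (rule prob_hit[OF j1 jk])
    also have "\<dots> \<le> x i / 2 ^ i" using jx(1)[of i] by (simp add: divide_right_mono)
    also have "\<dots> = 2 powr (- (real i * \<epsilon>))"
    proof -
      have "x i / 2 ^ i = 2 powr (real i * (1 - \<epsilon>)) / 2 powr real i" by (simp add: x_def powr_realpow)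
      also have "\<dots> = 2 powr (real i * (1 - \<epsilon>) - real i)" by (simp add: powr_diff)
      also have "real i * (1 - \<epsilon>) - real i = - (real i * \<epsilon>)" by (simp add: algebra_simps)
      finally show ?thesis .
    qed
    finally show "measure M (A i) \<le> 2 powr (- (real i * \<epsilon>))" .
  qed
  with AE_space show ?thesis
  proof eventually_elim
    case (elim \<omega>)
    then show ?case
    proof (elim eventually_mono, intro allI impI)
      fix i t s assume nA: "\<omega> \<notin> A i" and ts: "t \<le> s" "2 ^ i \<le> W t \<omega>"
      have "\<not> (\<exists>t s. t \<le> s \<and> 2^i \<le> W t \<omega> \<and> W s \<omega> \<le> j i)" using nA elim by (simp add: A_def)
      then have "j i < W s \<omega>" using ts by (meson not_le)
      then have "real (j i) + 1 \<le> real (W s \<omega>)" by linarith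
      then show "2 powr (real i * (1 - \<epsilon>)) < real (W s \<omega>)" using jx(2)[of i] unfolding x_def by linarith
    qed
  qed
qed

lemma AE_exit1:
  assumes \<epsilon>: "\<epsilon> > 0" "\<epsilon> < 1"
  shows "AE \<omega> in M. eventually (\<lambda>i. \<exists>s\<le>4^i. 2 powr (real i * (1 - \<epsilon>)) \<le> real (W s \<omega>)) sequentially"
proof -
  define x where "x i = (2::real) powr (real i * (1 - \<epsilon>))" for i :: nat
  define b where "b i = nat \<lceil>x i\<rceil>" for i
  define A where "A i = {\<omega> \<in> space M. \<forall>s\<le>4^i. W s \<omega> < b i}" for i
  have x1: "x i \<ge> 1" for i unfolding x_def using \<epsilon> by (intro ge_one_powr_ge_zero) auto
  have bx: "x i \<le> real (b i)" "real (b i) < x i + 1" for i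
    using x1[of i] unfolding b_def by (auto simp: of_nat_nat) linarith
  have "AE \<omega> in M. eventually (\<lambda>i. \<omega> \<notin> A i) sequentially"
  proof (rule BC[of A 1 "\<lambda>i. 2 * 2 powr (- (real i * \<epsilon>))"])
    show "A i \<in> sets M" for i
    proof -
      have "A i = {\<omega> \<in> space M. pre (4^i) \<omega> \<in> {h. \<forall>k<length h. h!k < b i}}"
        unfolding A_def by (auto simp: less_Suc_eq_le)
      then show ?thesis using pre_sets by simp
    qed
    show "summable (\<lambda>i::nat. 2 * 2 powr (- (real i * \<epsilon>)))" by (intro summable_mult summable_geo_powr[OF \<epsilon>(1)])
    fix i :: nat assume i: "i \<ge> 1"
    have "x i > 1" unfolding x_def using \<epsilon> i by (intro gr_one_powr) auto
    then have b2: "2 \<le> b i" unfolding b_def by linarith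
    have "measure M (A i) \<le> (2 + (real (b i))^2) / (3 * real (4^i))" unfolding A_def
      by (rule prob_exit[OF b2]) simp
    also have "\<dots> \<le> 6 * (x i)^2 / (3 * real (4^i))"
    proof -
      have "real (b i) \<le> 2 * x i" using bx[of i] x1[of i] by linarith
      then have "(real (b i))^2 \<le> (2 * x i)^2" by (intro power_mono) auto
      moreover have "1 \<le> (x i)^2" using x1[of i] by (simp add: one_le_power)
      ultimately have le: "2 + (real (b i))^2 \<le> 6 * (x i)^2" by (simp add: power_mult_distrib)
      show ?thesis by (rule divide_right_mono[OF le]) simp
    qed
    also have "\<dots> = 2 * 2 powr (- (2 * (real i * \<epsilon>)))"
    proof -
      have "(x i)^2 = x i * x i" by (simp add: power2_eq_square)
      also have "\<dots> = 2 powr (real i * (1 - \<epsilon>) + real i * (1 - \<epsilon>))" unfolding x_def by (rule powr_add[symmetric])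
      also have "real i * (1 - \<epsilon>) + real i * (1 - \<epsilon>) = 2 * (real i * (1 - \<epsilon>))" by simp
      finally have x2: "(x i)^2 = 2 powr (2 * (real i * (1 - \<epsilon>)))" .
      have "(2::real) powr (2 * real i) = 2 powr (real i + real i)" by simp
      also have "\<dots> = 2 powr real i * 2 powr real i" by (rule powr_add)
      also have "\<dots> = 2^i * 2^i" by (simp add: powr_realpow)
      also have "\<dots> = (4::real)^i" by (simp add: power_mult_distrib[symmetric])
      finally have "(4::real)^i = 2 powr (2 * real i)" by simp
      with x2 have "6 * (x i)^2 / (3 * 4^i) = 2 * (2 powr (2 * (real i * (1 - \<epsilon>))) / 2 powr (2 * real i))" by simp
      also have "2 powr (2 * (real i * (1 - \<epsilon>))) / 2 powr (2 * real i) = 2 powr (- (2 * (real i * \<epsilon>)))"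
        by (simp add: powr_diff[symmetric] algebra_simps)
      finally show ?thesis by simp
    qed
    also have "\<dots> \<le> 2 * 2 powr (- (real i * \<epsilon>))"
      using \<epsilon> by (simp add: powr_le_cancel_iff)
    finally show "measure M (A i) \<le> 2 * 2 powr (- (real i * \<epsilon>))" .
  qed
  with AE_space show ?thesis
  proof eventually_elim
    case (elim \<omega>)
    then show ?case
    proof (elim eventually_mono)
      fix i assume "\<omega> \<notin> A i"
      then obtain s where "s \<le> 4^i" "b i \<le> W s \<omega>" using elim by (auto simp: A_def not_less)
      then show "\<exists>s\<le>4^i. 2 powr (real i * (1 - \<epsilon>)) \<le> real (W s \<omega>)"
        using bx(1)[of i] unfolding x_def by (intro exI[of _ s]) auto
    qed
  qed
qed

end


locale wpath =
  fixes w :: "nat \<Rightarrow> nat"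
  assumes w0: "w 0 = 0"
    and st: "\<And>n. w (Suc n) = w n + 1 \<or> (2 \<le> w n \<and> w (Suc n) + 1 = w n)"
begin

lemma w_pos: "n \<ge> 1 \<Longrightarrow> w n \<ge> 1"
proof -
  assume "n \<ge> 1"
  then obtain m where "n = Suc m" by (cases n) auto
  then show ?thesis using st[of m] by auto
qed

lemma w_le: "w n \<le> n"
proof (induction n)
  case 0 then show ?case by (simp add: w0)
next
  case (Suc n) then show ?case using st[of n] by auto
qed

lemma ivt: "k \<le> w s \<Longrightarrow> \<exists>t\<le>s. w t = k"
proof (induction s)
  case 0 then show ?case using w0 by auto
next
  case (Suc s)
  show ?case
  proof (cases "k \<le> w s")
    case True then show ?thesis using Suc.IH by (meson le_SucI)
  next
    case False
    then have "w (Suc s) = k" using Suc.prems st[of s] by auto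
    then show ?thesis by blast
  qed
qed

lemma log2_ivl: assumes "(1::nat) \<le> y" shows "\<exists>i. 2^i \<le> y \<and> y < 2^(Suc i)"
  using ex_power_ivl1[of 2 y] assms by auto

lemma H_cont:
  assumes \<delta>: "0 < \<delta>" "\<delta> < 1"
    and H: "eventually (\<lambda>i. \<forall>t s. t \<le> s \<longrightarrow> 2^i \<le> w t \<longrightarrow> 2 powr (real i * (1 - \<delta>)) < real (w s)) sequentially"
  shows "\<exists>K0::nat. K0 \<ge> 1 \<and> (\<forall>t s. t \<le> s \<longrightarrow> K0 \<le> w t \<longrightarrow> (real (w t) / 2) powr (1 - \<delta>) < real (w s))"
proof -
  obtain I where I: "\<And>i t s. i \<ge> I \<Longrightarrow> t \<le> s \<Longrightarrow> 2^i \<le> w t \<Longrightarrow> 2 powr (real i * (1 - \<delta>)) < real (w s)"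
    using H unfolding eventually_sequentially by blast
  have "\<forall>t s. t \<le> s \<longrightarrow> 2^I \<le> w t \<longrightarrow> (real (w t) / 2) powr (1 - \<delta>) < real (w s)"
  proof (intro allI impI)
    fix t s assume ts: "t \<le> s" "2^I \<le> w t"
    then have "1 \<le> w t" by (metis le_trans one_le_power one_le_numeral)
    then obtain i where i: "2^i \<le> w t" "w t < 2^(Suc i)" using log2_ivl by blast
    have "(2::nat)^I < 2^(Suc i)" using ts(2) i(2) by linarith
    then have "I < Suc i" by (rule power_less_imp_less_exp[rotated]) simp
    then have iI: "I \<le> i" by simp
    have "real (w t) < 2 * 2^i" using i(2) by (metis of_nat_less_iff of_nat_numeral of_nat_power power_Suc of_nat_mult)
    then have "real (w t) / 2 \<le> 2 powr real i" by (simp add: powr_realpow)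
    then have "(real (w t) / 2) powr (1 - \<delta>) \<le> (2 powr real i) powr (1 - \<delta>)"
      using \<delta> by (intro powr_mono2) auto
    also have "\<dots> = 2 powr (real i * (1 - \<delta>))" by (simp add: powr_powr)
    also have "\<dots> < real (w s)" using I[OF iI ts(1) i(1)] .
    finally show "(real (w t) / 2) powr (1 - \<delta>) < real (w s)" .
  qed
  then show ?thesis by (intro exI[of _ "2^I"]) auto
qed

lemma X_cont:
  assumes \<delta>: "0 < \<delta>" "\<delta> < 1"
    and X: "eventually (\<lambda>i. \<exists>s\<le>4^i. 2 powr (real i * (1 - \<delta>)) \<le> real (w s)) sequentially"
  shows "eventually (\<lambda>n. \<exists>s\<le>n. (real n / 4) powr ((1 - \<delta>)/2) \<le> real (w s)) sequentially"
proof -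
  obtain I where I: "\<And>i. i \<ge> I \<Longrightarrow> \<exists>s\<le>4^i. 2 powr (real i * (1 - \<delta>)) \<le> real (w s)"
    using X unfolding eventually_sequentially by blast
  have "\<exists>s\<le>n. (real n / 4) powr ((1 - \<delta>)/2) \<le> real (w s)" if n: "n \<ge> 4^I" for n
  proof -
    have "1 \<le> n" using n by (metis le_trans one_le_power one_le_numeral)
    then obtain i where i: "4^i \<le> n" "n < 4^(Suc i)" using ex_power_ivl1[of 4 n] by auto
    have "(4::nat)^I < 4^(Suc i)" using n i(2) by linarith
    then have "I < Suc i" by (rule power_less_imp_less_exp[rotated]) simp
    then have iI: "I \<le> i" by simp
    obtain s where s: "s \<le> 4^i" "2 powr (real i * (1 - \<delta>)) \<le> real (w s)" using I[OF iI] by blast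
    have "real n < 4 * 4^i" using i(2) by (metis of_nat_less_iff of_nat_numeral of_nat_power power_Suc of_nat_mult)
    then have "real n / 4 \<le> 4 powr real i" by (simp add: powr_realpow)
    then have "(real n / 4) powr ((1 - \<delta>)/2) \<le> (4 powr real i) powr ((1 - \<delta>)/2)"
      using \<delta> by (intro powr_mono2) auto
    also have "\<dots> = 2 powr (real i * (1 - \<delta>))"
    proof -
      have "(4::real) = 2 powr 2" by simp
      then have "(4 powr real i) powr ((1 - \<delta>)/2) = 2 powr (2 * (real i * ((1 - \<delta>)/2)))"
        by (metis powr_powr mult.assoc)
      then show ?thesis by simp
    qed
    also have "\<dots> \<le> real (w s)" using s(2) .
    finally show ?thesis using s(1) i(1) by (intro exI[of _ s]) auto
  qed
  then show ?thesis unfolding eventually_sequentially by blast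
qed

lemma D_lower:
  assumes \<delta>: "0 < \<delta>" "\<delta> < 1"
    and H: "eventually (\<lambda>i. \<forall>t s. t \<le> s \<longrightarrow> 2^i \<le> w t \<longrightarrow> 2 powr (real i * (1 - \<delta>)) < real (w s)) sequentially"
    and X: "eventually (\<lambda>i. \<exists>s\<le>4^i. 2 powr (real i * (1 - \<delta>)) \<le> real (w s)) sequentially"
  shows "\<exists>C. \<forall>n\<ge>1. (1/2 - \<delta>) * ln (real n) - C \<le> ln (real (w n))"
proof -
  obtain K0 :: nat where K0: "K0 \<ge> 1" "\<And>t s. t \<le> s \<Longrightarrow> K0 \<le> w t \<Longrightarrow> (real (w t) / 2) powr (1 - \<delta>) < real (w s)"
    using H_cont[OF \<delta> H] by blast
  define c where "c = (1 - \<delta>) / 2"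
  have c: "c > 0" using \<delta> by (simp add: c_def)
  have ev1: "eventually (\<lambda>n. \<exists>s\<le>n. (real n / 4) powr c \<le> real (w s)) sequentially"
    unfolding c_def by (rule X_cont[OF \<delta> X])
  have lim: "filterlim (\<lambda>n::nat. (real n / 4) powr c) at_top sequentially" using c by real_asymp
  have ev2: "eventually (\<lambda>n. real K0 \<le> (real n / 4) powr c) sequentially"
    using lim by (simp add: filterlim_at_top)
  define C0 where "C0 = (1 - \<delta>) * (c * ln 4 + ln 2)"
  have C0: "C0 \<ge> 0" using \<delta> c by (simp add: C0_def)
  have ev3: "eventually (\<lambda>n. n \<ge> 1) sequentially" by (simp add: eventually_ge_at_top)
  have "eventually (\<lambda>n. (1/2 - \<delta>) * ln (real n) - C0 \<le> ln (real (w n))) sequentially"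
    using ev1 ev2 ev3
  proof eventually_elim
    case (elim n)
    obtain s where s: "s \<le> n" "(real n / 4) powr c \<le> real (w s)" using elim(1) by blast
    have n1: "real n \<ge> 1" using elim(3) by simp
    have ws: "real K0 \<le> real (w s)" using elim(2) s(2) by linarith
    then have wsK: "K0 \<le> w s" by simp
    have ws1: "real (w s) \<ge> 1" using ws K0(1) by linarith
    have lt: "(real (w s) / 2) powr (1 - \<delta>) < real (w n)" by (rule K0(2)[OF s(1) wsK])
    have pos: "(real (w s) / 2) powr (1 - \<delta>) > 0" using ws1 by simp
    have "ln ((real (w s) / 2) powr (1 - \<delta>)) < ln (real (w n))" using lt pos by (metis ln_less_cancel_iff less_trans)
    then have a: "(1 - \<delta>) * (ln (real (w s)) - ln 2) < ln (real (w n))"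
      using ws1 by (simp add: ln_div)
    have pp: "(real n / 4) powr c > 0" using n1 by simp
    have "ln ((real n / 4) powr c) \<le> ln (real (w s))" using s(2) pp by (metis ln_le_cancel_iff less_le_trans)
    then have b: "c * (ln (real n) - ln 4) \<le> ln (real (w s))" using n1 by (simp add: ln_div)
    have "(1/2 - \<delta>) * ln (real n) \<le> (1 - \<delta>) * c * ln (real n)"
    proof -
      have e: "(1 - \<delta>) * c = 1/2 - \<delta> + \<delta>^2/2" unfolding c_def by (simp add: field_simps power2_eq_square)
      have "(1/2 - \<delta>) \<le> (1 - \<delta>) * c" unfolding e by simp
      moreover have "ln (real n) \<ge> 0" using n1 by simp
      ultimately show ?thesis by (intro mult_right_mono) auto
    qed
    also have "(1 - \<delta>) * c * ln (real n) - C0 = (1 - \<delta>) * (c * (ln (real n) - ln 4) - ln 2)"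
      by (simp add: C0_def algebra_simps)
    also have "\<dots> \<le> (1 - \<delta>) * (ln (real (w s)) - ln 2)" using b \<delta> by (intro mult_left_mono) auto
    finally show ?case using a by linarith
  qed
  then obtain N where N: "\<And>n. n \<ge> N \<Longrightarrow> (1/2 - \<delta>) * ln (real n) - C0 \<le> ln (real (w n))"
    unfolding eventually_sequentially by blast
  define C where "C = C0 + ln (real (max N 1))"
  have "(1/2 - \<delta>) * ln (real n) - C \<le> ln (real (w n))" if n: "n \<ge> 1" for n
  proof (cases "n \<ge> N")
    case True
    have "ln (real (max N 1)) \<ge> 0" by simp
    then show ?thesis using N[OF True] unfolding C_def by linarith
  next
    case False
    have wn: "ln (real (w n)) \<ge> 0" using w_pos[OF n] by simp
    have "(1/2 - \<delta>) * ln (real n) \<le> ln (real n)"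
    proof -
      have "ln (real n) \<ge> 0" using n by simp
      then show ?thesis using \<delta> mult_right_mono[of "1/2 - \<delta>" 1 "ln (real n)"] by simp
    qed
    also have "\<dots> \<le> ln (real (max N 1))" using False n by simp
    finally show ?thesis using wn C0 unfolding C_def by linarith
  qed
  then show ?thesis by blast
qed

lemma D_upper:
  assumes \<epsilon>: "0 < \<epsilon>"
    and U: "eventually (\<lambda>n. real (w n) < real n powr (1/2 + \<epsilon>)) sequentially"
  shows "\<exists>C. \<forall>n\<ge>1. ln (real (w n)) \<le> (1/2 + \<epsilon>) * ln (real n) + C"
proof -
  obtain N where N: "\<And>n. n \<ge> N \<Longrightarrow> real (w n) < real n powr (1/2 + \<epsilon>)"
    using U unfolding eventually_sequentially by blast
  define C where "C = ln (real (max N 1))"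
  have "ln (real (w n)) \<le> (1/2 + \<epsilon>) * ln (real n) + C" if n: "n \<ge> 1" for n
  proof -
    have wn: "real (w n) \<ge> 1" using w_pos[OF n] by simp
    have lnn: "ln (real n) \<ge> 0" using n by simp
    have C0: "C \<ge> 0" by (simp add: C_def)
    show ?thesis
    proof (cases "n \<ge> N")
      case True
      have "ln (real (w n)) < ln (real n powr (1/2 + \<epsilon>))" using N[OF True] wn n by (subst ln_less_cancel_iff) auto
      then show ?thesis using C0 by simp
    next
      case False
      have "ln (real (w n)) \<le> ln (real n)" using w_le[of n] wn by simp
      also have "\<dots> \<le> C" using False n by (simp add: C_def)
      moreover have "(1/2 + \<epsilon>) * ln (real n) \<ge> 0" using lnn \<epsilon> by simp
      ultimately show ?thesis by linarith
    qed
  qed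
  then show ?thesis by blast
qed

lemma unbounded:
  assumes "\<forall>n\<ge>1. (1/2 - 1/4) * ln (real n) - C \<le> ln (real (w n))"
  shows "\<exists>s. k \<le> w s"
proof -
  define n where "n = nat \<lceil>exp (4 * (C + ln (real k + 1)))\<rceil> + 1"
  have n1: "n \<ge> 1" by (simp add: n_def)
  have "exp (4 * (C + ln (real k + 1))) \<le> real n" unfolding n_def by linarith
  then have "4 * (C + ln (real k + 1)) \<le> ln (real n)"
    by (metis exp_gt_zero exp_le_cancel_iff exp_ln less_le_trans)
  then have "ln (real k + 1) \<le> ln (real (w n))" using assms n1 by fastforce
  then have "real k + 1 \<le> real (w n)" using w_pos[OF n1] by (subst (asm) ln_le_cancel_iff) auto
  then show ?thesis by (intro exI[of _ n]) simp
qed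

lemma hit_props:
  assumes unb: "\<And>k. \<exists>s. k \<le> w s"
  shows "w (hit_time k w) = k" "hit_time k w < hit_time (Suc k) w" "k \<ge> 1 \<Longrightarrow> hit_time k w \<ge> 1"
proof -
  have ex: "\<exists>t. w t = j" for j using unb[of j] ivt by blast
  show wk: "w (hit_time k w) = k" unfolding hit_time_def by (rule LeastI_ex[OF ex])
  have wk1: "w (hit_time (Suc k) w) = Suc k" unfolding hit_time_def by (rule LeastI_ex[OF ex])
  then obtain t where t: "t \<le> hit_time (Suc k) w" "w t = k" using ivt[of k "hit_time (Suc k) w"] by auto
  have "hit_time k w \<le> t" unfolding hit_time_def using t(2) by (rule Least_le)
  moreover have "t \<noteq> hit_time (Suc k) w" using t(2) wk1 by auto
  ultimately show "hit_time k w < hit_time (Suc k) w" using t(1) by linarith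
  show "k \<ge> 1 \<Longrightarrow> hit_time k w \<ge> 1" using wk w0 by (metis less_one not_le not_one_le_zero)
qed

lemma D_part2:
  assumes \<delta>: "0 < \<delta>" "\<delta> < 1"
    and H: "eventually (\<lambda>i. \<forall>t s. t \<le> s \<longrightarrow> 2^i \<le> w t \<longrightarrow> 2 powr (real i * (1 - \<delta>)) < real (w s)) sequentially"
    and unb: "\<And>k. \<exists>s. k \<le> w s"
  shows "\<exists>C. \<forall>k\<ge>1. \<forall>n\<ge>hit_time k w. ln (real k) - ln (real (w n)) \<le> \<delta> * ln (real k) + C"
proof -
  obtain K0 :: nat where K0: "K0 \<ge> 1" "\<And>t s. t \<le> s \<Longrightarrow> K0 \<le> w t \<Longrightarrow> (real (w t) / 2) powr (1 - \<delta>) < real (w s)"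
    using H_cont[OF \<delta> H] by blast
  define C where "C = ln 2 + ln (real K0)"
  have "ln (real k) - ln (real (w n)) \<le> \<delta> * ln (real k) + C" if k: "k \<ge> 1" and n: "n \<ge> hit_time k w" for k n
  proof -
    have hk: "w (hit_time k w) = k" by (rule hit_props(1)[OF unb])
    have n1: "n \<ge> 1" using hit_props(3)[OF unb k] n by linarith
    have wn: "real (w n) \<ge> 1" using w_pos[OF n1] by simp
    have lk: "ln (real k) \<ge> 0" using k by simp
    have l2: "ln (2::real) \<ge> 0" by simp
    have lK: "ln (real K0) \<ge> 0" using K0(1) by simp
    show ?thesis
    proof (cases "K0 \<le> k")
      case True
      have lt: "(real k / 2) powr (1 - \<delta>) < real (w n)" using K0(2)[OF n] True hk by simp
      have pos: "(real k / 2) powr (1 - \<delta>) > 0" using k by simp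
      have "ln ((real k / 2) powr (1 - \<delta>)) < ln (real (w n))" using lt pos by (metis ln_less_cancel_iff less_trans)
      then have "(1 - \<delta>) * (ln (real k) - ln 2) < ln (real (w n))" using k by (simp add: ln_div)
      then have "ln (real k) - ln (real (w n)) < \<delta> * ln (real k) + (1 - \<delta>) * ln 2" by (simp add: algebra_simps)
      also have "(1 - \<delta>) * ln 2 \<le> ln 2" using \<delta> l2 by (simp add: mult_le_cancel_right1)
      finally show ?thesis using lK by (simp add: C_def)
    next
      case False
      have "ln (real k) \<le> ln (real K0)" using False k by simp
      moreover have "ln (real (w n)) \<ge> 0" using wn by simp
      moreover have "\<delta> * ln (real k) \<ge> 0" using \<delta> lk by simp
      ultimately show ?thesis using l2 unfolding C_def by linarith
    qed
  qed
  then show ?thesis by blast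
qed

end


lemma lim_from_bounds:
  fixes X :: "nat \<Rightarrow> real"
  assumes "\<And>e. e > 0 \<Longrightarrow> eventually (\<lambda>N. 0 \<le> X N \<and> X N \<le> e) sequentially"
  shows "X \<longlonglongrightarrow> 0"
proof (rule tendstoI)
  fix r :: real assume r: "r > 0"
  have "eventually (\<lambda>N. 0 \<le> X N \<and> X N \<le> r/2) sequentially" by (rule assms) (use r in simp)
  then show "eventually (\<lambda>N. dist (X N) 0 < r) sequentially"
    by eventually_elim (use r in auto)
qed

lemma ev_lnN: fixes C e :: real assumes "e > 0"
  shows "eventually (\<lambda>N::nat. 2 \<le> N \<and> C / ln (real N) \<le> e) sequentially"
proof -
  have "(\<lambda>N::nat. C / ln (real N)) \<longlonglongrightarrow> 0" by real_asymp
  then have "eventually (\<lambda>N. C / ln (real N) < e) sequentially" using assms by (rule order_tendstoD)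
  moreover have "eventually (\<lambda>N::nat. 2 \<le> N) sequentially" by (rule eventually_ge_at_top)
  ultimately show ?thesis by eventually_elim auto
qed

lemma part1_det:
  fixes w :: "nat \<Rightarrow> nat" and \<beta> :: real
  assumes \<beta>: "\<beta> > 0"
    and B: "\<And>\<epsilon>. \<epsilon> > 0 \<Longrightarrow> \<exists>C. \<forall>n\<ge>1. \<bar>ln (real (w n)) - ln (sqrt (real n))\<bar> \<le> \<epsilon> * ln (real n) + C"
  shows "(\<lambda>N::nat. (SUP n\<in>{n::nat. 1 \<le> n \<and> real n \<le> real N powr \<beta>}.
                  \<bar>log (real N) (real (w n)) - log (real N) (sqrt (real n))\<bar>)) \<longlonglongrightarrow> 0"
proof (rule lim_from_bounds)
  fix e :: real assume e: "e > 0"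
  define \<epsilon> where "\<epsilon> = e / (2 * \<beta>)"
  have \<epsilon>: "\<epsilon> > 0" using e \<beta> by (simp add: \<epsilon>_def)
  obtain C0 where C0: "\<And>n. n \<ge> 1 \<Longrightarrow> \<bar>ln (real (w n)) - ln (sqrt (real n))\<bar> \<le> \<epsilon> * ln (real n) + C0"
    using B[OF \<epsilon>] by blast
  define C where "C = max C0 0"
  have C: "\<And>n. n \<ge> 1 \<Longrightarrow> \<bar>ln (real (w n)) - ln (sqrt (real n))\<bar> \<le> \<epsilon> * ln (real n) + C"
    using C0 unfolding C_def by (smt (verit))
  have Cn: "C \<ge> 0" by (simp add: C_def)
  have e2: "e / 2 > 0" using e by simp
  show "eventually (\<lambda>N. 0 \<le> (SUP n\<in>{n::nat. 1 \<le> n \<and> real n \<le> real N powr \<beta>}.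
                  \<bar>log (real N) (real (w n)) - log (real N) (sqrt (real n))\<bar>) \<and>
            (SUP n\<in>{n::nat. 1 \<le> n \<and> real n \<le> real N powr \<beta>}.
                  \<bar>log (real N) (real (w n)) - log (real N) (sqrt (real n))\<bar>) \<le> e) sequentially"
    using ev_lnN[OF e2, of C]
  proof eventually_elim
    case (elim N)
    define S where "S = {n::nat. 1 \<le> n \<and> real n \<le> real N powr \<beta>}"
    define f where "f n = \<bar>log (real N) (real (w n)) - log (real N) (sqrt (real n))\<bar>" for n
    have N2: "real N \<ge> 2" using elim by simp
    have lnN: "ln (real N) > 0" using N2 by simp
    have "1 \<in> S" unfolding S_def using N2 \<beta> by (simp add: ge_one_powr_ge_zero)
    then have Sne: "S \<noteq> {}" by blast
    have "S \<subseteq> {..nat \<lceil>real N powr \<beta>\<rceil>}" unfolding S_def by (auto simp: le_nat_iff) linarith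
    then have Sfin: "finite S" by (rule finite_subset) simp
    have fS: "f n \<le> e" if n: "n \<in> S" for n
    proof -
      have n1: "n \<ge> 1" and nb: "real n \<le> real N powr \<beta>" using n by (auto simp: S_def)
      have "ln (real n) \<le> ln (real N powr \<beta>)" using nb n1 N2 by (subst ln_le_cancel_iff) auto
      then have lnn: "ln (real n) \<le> \<beta> * ln (real N)" by simp
      have "f n = \<bar>ln (real (w n)) - ln (sqrt (real n))\<bar> / ln (real N)"
        unfolding f_def log_def using lnN by (simp add: diff_divide_distrib[symmetric])
      also have "\<dots> \<le> (\<epsilon> * ln (real n) + C) / ln (real N)" using C[OF n1] lnN by (simp add: divide_right_mono)
      also have "\<dots> \<le> (\<epsilon> * (\<beta> * ln (real N)) + C) / ln (real N)"
        using lnn \<epsilon> lnN by (intro divide_right_mono add_right_mono mult_left_mono) auto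
      also have "\<dots> = \<epsilon> * \<beta> + C / ln (real N)" using lnN by (simp add: field_simps)
      also have "\<dots> \<le> e / 2 + e / 2"
      proof -
        have cN: "C / ln (real N) \<le> e / 2" using elim by blast
        have "\<epsilon> * \<beta> = e / 2" using \<beta> by (simp add: \<epsilon>_def)
        then show ?thesis using cN by linarith
      qed
      finally show ?thesis by simp
    qed
    have "(SUP n\<in>S. f n) \<le> e" using Sne fS by (intro cSUP_least) auto
    moreover have "0 \<le> (SUP n\<in>S. f n)"
    proof -
      have "bdd_above (f ` S)" using Sfin by (intro bdd_above_finite) simp
      then have "f 1 \<le> (SUP n\<in>S. f n)" using \<open>1 \<in> S\<close> by (intro cSUP_upper)
      moreover have "f 1 \<ge> 0" by (simp add: f_def)
      ultimately show ?thesis by linarith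
    qed
    ultimately show ?case unfolding S_def f_def by simp
  qed
qed

lemma part2_det:
  fixes w :: "nat \<Rightarrow> nat"
  assumes hk: "\<And>k. w (hit_time k w) = k" and hlt: "\<And>k. hit_time k w < hit_time (Suc k) w"
    and B: "\<And>\<epsilon>. \<epsilon> > 0 \<Longrightarrow> \<exists>C. \<forall>k\<ge>1. \<forall>n\<ge>hit_time k w. ln (real k) - ln (real (w n)) \<le> \<epsilon> * ln (real k) + C"
  shows "(\<lambda>N::nat. Max ((\<lambda>k. Max ((\<lambda>n. log (real N) (real k) - log (real N) (real (w n)))
                               ` {hit_time k w ..< hit_time (Suc k) w})) ` {1..N})) \<longlonglongrightarrow> 0"
proof (rule lim_from_bounds)
  fix e :: real assume e: "e > 0"
  define \<epsilon> where "\<epsilon> = e / 2"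
  have \<epsilon>: "\<epsilon> > 0" using e by (simp add: \<epsilon>_def)
  obtain C0 where C0: "\<And>k n. k \<ge> 1 \<Longrightarrow> n \<ge> hit_time k w \<Longrightarrow> ln (real k) - ln (real (w n)) \<le> \<epsilon> * ln (real k) + C0"
    using B[OF \<epsilon>] by blast
  define C where "C = max C0 0"
  have C: "\<And>k n. k \<ge> 1 \<Longrightarrow> n \<ge> hit_time k w \<Longrightarrow> ln (real k) - ln (real (w n)) \<le> \<epsilon> * ln (real k) + C"
    using C0 unfolding C_def by (smt (verit))
  show "eventually (\<lambda>N. 0 \<le> Max ((\<lambda>k. Max ((\<lambda>n. log (real N) (real k) - log (real N) (real (w n)))
                               ` {hit_time k w ..< hit_time (Suc k) w})) ` {1..N}) \<and>
          Max ((\<lambda>k. Max ((\<lambda>n. log (real N) (real k) - log (real N) (real (w n)))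
                               ` {hit_time k w ..< hit_time (Suc k) w})) ` {1..N}) \<le> e) sequentially"
    using ev_lnN[OF \<epsilon>, of C]
  proof eventually_elim
    case (elim N)
    define g where "g k = Max ((\<lambda>n. log (real N) (real k) - log (real N) (real (w n))) ` {hit_time k w ..< hit_time (Suc k) w})" for k
    have N2: "real N \<ge> 2" using elim by simp
    have lnN: "ln (real N) > 0" using N2 by simp
    have ne: "{hit_time k w ..< hit_time (Suc k) w} \<noteq> {}" for k using hlt[of k] by simp
    have gle: "g k \<le> e" if k: "k \<in> {1..N}" for k
      unfolding g_def
    proof (subst Max_le_iff, simp, use ne in simp, intro ballI)
      fix y assume "y \<in> (\<lambda>n. log (real N) (real k) - log (real N) (real (w n))) ` {hit_time k w ..< hit_time (Suc k) w}"
      then obtain n where n: "n \<ge> hit_time k w" and y: "y = log (real N) (real k) - log (real N) (real (w n))" by auto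
      have k1: "k \<ge> 1" "k \<le> N" using k by auto
      have "y = (ln (real k) - ln (real (w n))) / ln (real N)" unfolding y log_def by (simp add: diff_divide_distrib)
      also have "\<dots> \<le> (\<epsilon> * ln (real k) + C) / ln (real N)" using C[OF k1(1) n] lnN by (simp add: divide_right_mono)
      also have "\<dots> \<le> (\<epsilon> * ln (real N) + C) / ln (real N)"
        using k1 \<epsilon> lnN by (intro divide_right_mono add_right_mono mult_left_mono) auto
      also have "\<dots> = \<epsilon> + C / ln (real N)" using lnN by (simp add: field_simps)
      also have "\<dots> \<le> e"
      proof -
        have cN: "C / ln (real N) \<le> \<epsilon>" using elim by blast
        then show ?thesis unfolding \<epsilon>_def by linarith
      qed
      finally show "y \<le> e" .
    qed
    have g1: "0 \<le> g 1"
    proof -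
      have "log (real N) (real 1) - log (real N) (real (w (hit_time 1 w))) \<le> g 1"
        unfolding g_def using hlt[of 1] by (intro Max_ge) auto
      then show ?thesis using hk[of 1] by simp
    qed
    have "Max (g ` {1..N}) \<le> e" using gle elim by (subst Max_le_iff) auto
    moreover have "g 1 \<le> Max (g ` {1..N})" using elim by (intro Max_ge) auto
    ultimately show ?case using g1 unfolding g_def by auto
  qed
qed


lemma ex_em: assumes "(\<epsilon>::real) > 0" shows "\<exists>m::nat. 1 / (real m + 2) \<le> \<epsilon>"
proof -
  obtain n where n: "inverse (real (Suc n)) < \<epsilon>" using reals_Archimedean[OF assms] by blast
  have "1 / (real n + 2) \<le> inverse (real (Suc n))" by (simp add: inverse_eq_divide frac_le)
  then show ?thesis using n by (intro exI[of _ n]) linarith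
qed

lemma em_bounds: "0 < 1 / (real m + 2)" "1 / (real m + 2) < (1::real)"
  by auto

lemma good_path:
  fixes w :: "nat \<Rightarrow> nat"
  assumes V: "\<And>n. w (Suc n) = w n + 1 \<or> (2 \<le> w n \<and> w (Suc n) + 1 = w n)" and w0: "w 0 = 0"
    and U: "\<And>m. eventually (\<lambda>n. real (w n) < real n powr (1/2 + 1 / (real m + 2))) sequentially"
    and H: "\<And>m. eventually (\<lambda>i. \<forall>t s. t \<le> s \<longrightarrow> 2^i \<le> w t \<longrightarrow> 2 powr (real i * (1 - 1 / (real m + 2))) < real (w s)) sequentially"
    and X: "\<And>m. eventually (\<lambda>i. \<exists>s\<le>4^i. 2 powr (real i * (1 - 1 / (real m + 2))) \<le> real (w s)) sequentially"
  shows "(\<forall>\<beta>::real. \<beta> > 0 \<longrightarrow> ((\<lambda>N::nat.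
               (SUP n\<in>{n::nat. 1 \<le> n \<and> real n \<le> real N powr \<beta>}.
                  \<bar>log (real N) (real (w n)) - log (real N) (sqrt (real n))\<bar>)) \<longlonglongrightarrow> 0))
       \<and> ((\<lambda>N::nat. Max ((\<lambda>k. Max ((\<lambda>n. log (real N) (real k) - log (real N) (real (w n)))
                               ` {hit_time k w ..< hit_time (Suc k) w})) ` {1..N})) \<longlonglongrightarrow> 0)"
proof -
  interpret wpath w using V w0 by unfold_locales auto
  have low: "\<exists>C. \<forall>n\<ge>1. (1/2 - \<epsilon>) * ln (real n) - C \<le> ln (real (w n))" if \<epsilon>: "\<epsilon> > 0" for \<epsilon>
  proof -
    obtain m where m: "1 / (real m + 2) \<le> \<epsilon>" using ex_em[OF \<epsilon>] by blast
    obtain C where C: "\<forall>n\<ge>1. (1/2 - 1 / (real m + 2)) * ln (real n) - C \<le> ln (real (w n))"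
      using D_lower[OF em_bounds H X] by blast
    have "(1/2 - \<epsilon>) * ln (real n) - C \<le> ln (real (w n))" if n: "n \<ge> 1" for n
    proof -
      have "(1/2 - \<epsilon>) * ln (real n) \<le> (1/2 - 1 / (real m + 2)) * ln (real n)"
        using m n by (intro mult_right_mono) auto
      then show ?thesis using C n by fastforce
    qed
    then show ?thesis by blast
  qed
  have up: "\<exists>C. \<forall>n\<ge>1. ln (real (w n)) \<le> (1/2 + \<epsilon>) * ln (real n) + C" if \<epsilon>: "\<epsilon> > 0" for \<epsilon>
  proof -
    obtain m where m: "1 / (real m + 2) \<le> \<epsilon>" using ex_em[OF \<epsilon>] by blast
    obtain C where C: "\<forall>n\<ge>1. ln (real (w n)) \<le> (1/2 + 1 / (real m + 2)) * ln (real n) + C"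
      using D_upper[OF em_bounds(1) U] by blast
    have "ln (real (w n)) \<le> (1/2 + \<epsilon>) * ln (real n) + C" if n: "n \<ge> 1" for n
    proof -
      have "(1/2 + 1 / (real m + 2)) * ln (real n) \<le> (1/2 + \<epsilon>) * ln (real n)"
        using m n by (intro mult_right_mono) auto
      then show ?thesis using C n by fastforce
    qed
    then show ?thesis by blast
  qed
  have B1: "\<exists>C. \<forall>n\<ge>1. \<bar>ln (real (w n)) - ln (sqrt (real n))\<bar> \<le> \<epsilon> * ln (real n) + C" if \<epsilon>: "\<epsilon> > 0" for \<epsilon>
  proof -
    obtain C1 where C1: "\<forall>n\<ge>1. (1/2 - \<epsilon>) * ln (real n) - C1 \<le> ln (real (w n))" using low[OF \<epsilon>] by blast
    obtain C2 where C2: "\<forall>n\<ge>1. ln (real (w n)) \<le> (1/2 + \<epsilon>) * ln (real n) + C2" using up[OF \<epsilon>] by blast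
    have "\<bar>ln (real (w n)) - ln (sqrt (real n))\<bar> \<le> \<epsilon> * ln (real n) + (\<bar>C1\<bar> + \<bar>C2\<bar>)" if n: "n \<ge> 1" for n
    proof -
      have s: "ln (sqrt (real n)) = ln (real n) / 2" by (simp add: ln_sqrt)
      have a: "(1/2 - \<epsilon>) * ln (real n) - C1 \<le> ln (real (w n))" using C1 n by blast
      have b: "ln (real (w n)) \<le> (1/2 + \<epsilon>) * ln (real n) + C2" using C2 n by blast
      have e1: "(1/2 - \<epsilon>) * ln (real n) = ln (real n) / 2 - \<epsilon> * ln (real n)" by (simp add: algebra_simps)
      have e2: "(1/2 + \<epsilon>) * ln (real n) = ln (real n) / 2 + \<epsilon> * ln (real n)" by (simp add: algebra_simps)
      have c: "C1 \<le> \<bar>C1\<bar>" "C2 \<le> \<bar>C2\<bar>" "0 \<le> \<bar>C1\<bar>" "0 \<le> \<bar>C2\<bar>" by auto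
      have a': "ln (real n) / 2 - \<epsilon> * ln (real n) - C1 \<le> ln (real (w n))" using a unfolding e1 .
      have b': "ln (real (w n)) \<le> ln (real n) / 2 + \<epsilon> * ln (real n) + C2" using b unfolding e2 .
      show ?thesis unfolding s abs_le_iff by (intro conjI) (use a' b' c in linarith)+
    qed
    then show ?thesis by blast
  qed
  have unb: "\<And>k. \<exists>s. k \<le> w s"
  proof -
    fix k
    obtain C where "\<forall>n\<ge>1. (1/2 - 1/4) * ln (real n) - C \<le> ln (real (w n))" using low[of "1/4"] by auto
    then show "\<exists>s. k \<le> w s" by (rule unbounded)
  qed
  have B2: "\<exists>C. \<forall>k\<ge>1. \<forall>n\<ge>hit_time k w. ln (real k) - ln (real (w n)) \<le> \<epsilon> * ln (real k) + C" if \<epsilon>: "\<epsilon> > 0" for \<epsilon>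
  proof -
    obtain m where m: "1 / (real m + 2) \<le> \<epsilon>" using ex_em[OF \<epsilon>] by blast
    obtain C where C: "\<forall>k\<ge>1. \<forall>n\<ge>hit_time k w. ln (real k) - ln (real (w n)) \<le> 1 / (real m + 2) * ln (real k) + C"
      using D_part2[OF em_bounds H unb] by blast
    have "ln (real k) - ln (real (w n)) \<le> \<epsilon> * ln (real k) + C" if k: "k \<ge> 1" and n: "n \<ge> hit_time k w" for k n
    proof -
      have "1 / (real m + 2) * ln (real k) \<le> \<epsilon> * ln (real k)" using m k by (intro mult_right_mono) auto
      then show ?thesis using C k n by fastforce
    qed
    then show ?thesis by blast
  qed
  show ?thesis
  proof
    show "\<forall>\<beta>::real. \<beta> > 0 \<longrightarrow> ((\<lambda>N::nat.
               (SUP n\<in>{n::nat. 1 \<le> n \<and> real n \<le> real N powr \<beta>}.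
                  \<bar>log (real N) (real (w n)) - log (real N) (sqrt (real n))\<bar>)) \<longlonglongrightarrow> 0)"
      using part1_det B1 by blast
    show "(\<lambda>N::nat. Max ((\<lambda>k. Max ((\<lambda>n. log (real N) (real k) - log (real N) (real (w n)))
                               ` {hit_time k w ..< hit_time (Suc k) w})) ` {1..N})) \<longlonglongrightarrow> 0"
      by (rule part2_det[OF hit_props(1)[OF unb] hit_props(2)[OF unb] B2])
  qed
qed

context wchain
begin

lemma AE_good: "AE \<omega> in M. (\<forall>n. valid (pre n \<omega>))
   \<and> (\<forall>m::nat. eventually (\<lambda>n. real (W n \<omega>) < real n powr (1/2 + 1 / (real m + 2))) sequentially)
   \<and> (\<forall>m::nat. eventually (\<lambda>i. \<forall>t s. t \<le> s \<longrightarrow> 2^i \<le> W t \<omega> \<longrightarrow> 2 powr (real i * (1 - 1 / (real m + 2))) < real (W s \<omega>)) sequentially)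
   \<and> (\<forall>m::nat. eventually (\<lambda>i. \<exists>s\<le>4^i. 2 powr (real i * (1 - 1 / (real m + 2))) \<le> real (W s \<omega>)) sequentially)"
proof -
  have 1: "AE \<omega> in M. \<forall>n. valid (pre n \<omega>)" by (rule AE_valid)
  have 2: "AE \<omega> in M. \<forall>m::nat. eventually (\<lambda>n. real (W n \<omega>) < real n powr (1/2 + 1 / (real m + 2))) sequentially"
    by (subst AE_all_countable) (intro allI AE_upper1 em_bounds)
  have 3: "AE \<omega> in M. \<forall>m::nat. eventually (\<lambda>i. \<forall>t s. t \<le> s \<longrightarrow> 2^i \<le> W t \<omega> \<longrightarrow> 2 powr (real i * (1 - 1 / (real m + 2))) < real (W s \<omega>)) sequentially"
    by (subst AE_all_countable) (intro allI AE_hit1 em_bounds)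
  have 4: "AE \<omega> in M. \<forall>m::nat. eventually (\<lambda>i. \<exists>s\<le>4^i. 2 powr (real i * (1 - 1 / (real m + 2))) \<le> real (W s \<omega>)) sequentially"
    by (subst AE_all_countable) (intro allI AE_exit1 em_bounds)
  from 1 2 3 4 show ?thesis by eventually_elim blast
qed

lemma valid_path:
  assumes "\<forall>n. valid (pre n \<omega>)"
  shows "W 0 \<omega> = 0" "\<And>n. W (Suc n) \<omega> = W n \<omega> + 1 \<or> (2 \<le> W n \<omega> \<and> W (Suc n) \<omega> + 1 = W n \<omega>)"
proof -
  have "valid (pre 0 \<omega>)" using assms by blast
  then show "W 0 \<omega> = 0" unfolding valid_def using pre_nth[of 0 0 \<omega>] by simp
  fix n
  have v: "valid (pre (Suc n) \<omega>)" using assms by blast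
  have "Suc n < length (pre (Suc n) \<omega>)" by simp
  then have "pre (Suc n) \<omega> ! Suc n = pre (Suc n) \<omega> ! n + 1 \<or> (2 \<le> pre (Suc n) \<omega> ! n \<and> pre (Suc n) \<omega> ! Suc n + 1 = pre (Suc n) \<omega> ! n)"
    using v unfolding valid_def by blast
  then show "W (Suc n) \<omega> = W n \<omega> + 1 \<or> (2 \<le> W n \<omega> \<and> W (Suc n) \<omega> + 1 = W n \<omega>)" by simp
qed

end

theorem propositionA6:
  fixes M :: "'a measure" and W :: "nat \<Rightarrow> 'a \<Rightarrow> nat"
  assumes "is_wstar_chain M W"
  shows "(\<forall>\<beta>::real. \<beta> > 0 \<longrightarrow>
           (AE \<omega> in M. ((\<lambda>N::nat.
               (SUP n\<in>{n::nat. 1 \<le> n \<and> real n \<le> real N powr \<beta>}.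
                  \<bar>log (real N) (real (W n \<omega>)) - log (real N) (sqrt (real n))\<bar>))
             \<longlongrightarrow> 0) sequentially))
       \<and> (AE \<omega> in M. ((\<lambda>N::nat.
               Max ((\<lambda>k. Max ((\<lambda>n. log (real N) (real k) - log (real N) (real (W n \<omega>)))
                               ` {hit_time k (\<lambda>m. W m \<omega>) ..< hit_time (Suc k) (\<lambda>m. W m \<omega>)}))
                    ` {1..N}))
             \<longlongrightarrow> 0) sequentially)"
proof -
  interpret wchain M W by unfold_locales (rule assms)
  have G: "AE \<omega> in M. (\<forall>\<beta>::real. \<beta> > 0 \<longrightarrow> ((\<lambda>N::nat.
               (SUP n\<in>{n::nat. 1 \<le> n \<and> real n \<le> real N powr \<beta>}.
                  \<bar>log (real N) (real (W n \<omega>)) - log (real N) (sqrt (real n))\<bar>)) \<longlonglongrightarrow> 0))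
       \<and> ((\<lambda>N::nat. Max ((\<lambda>k. Max ((\<lambda>n. log (real N) (real k) - log (real N) (real (W n \<omega>)))
                               ` {hit_time k (\<lambda>m. W m \<omega>) ..< hit_time (Suc k) (\<lambda>m. W m \<omega>)})) ` {1..N})) \<longlonglongrightarrow> 0)"
    using AE_good
  proof eventually_elim
    case (elim \<omega>)
    have v: "\<forall>n. valid (pre n \<omega>)" using elim by blast
    show ?case
    proof (rule good_path[of "\<lambda>m. W m \<omega>"])
      show "\<And>n. W (Suc n) \<omega> = W n \<omega> + 1 \<or> (2 \<le> W n \<omega> \<and> W (Suc n) \<omega> + 1 = W n \<omega>)" by (rule valid_path(2)[OF v])
      show "W 0 \<omega> = 0" by (rule valid_path(1)[OF v])
      show "\<And>m. eventually (\<lambda>n. real (W n \<omega>) < real n powr (1/2 + 1 / (real m + 2))) sequentially" using elim by blast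
      show "\<And>m. eventually (\<lambda>i. \<forall>t s. t \<le> s \<longrightarrow> 2^i \<le> W t \<omega> \<longrightarrow> 2 powr (real i * (1 - 1 / (real m + 2))) < real (W s \<omega>)) sequentially" using elim by blast
      show "\<And>m. eventually (\<lambda>i. \<exists>s\<le>4^i. 2 powr (real i * (1 - 1 / (real m + 2))) \<le> real (W s \<omega>)) sequentially" using elim by blast
    qed
  qed
  show ?thesis
  proof
    show "\<forall>\<beta>::real. \<beta> > 0 \<longrightarrow>
           (AE \<omega> in M. ((\<lambda>N::nat.
               (SUP n\<in>{n::nat. 1 \<le> n \<and> real n \<le> real N powr \<beta>}.
                  \<bar>log (real N) (real (W n \<omega>)) - log (real N) (sqrt (real n))\<bar>))
             \<longlongrightarrow> 0) sequentially)"
    proof (intro allI impI)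
      fix \<beta> :: real assume "\<beta> > 0"
      from G show "AE \<omega> in M. ((\<lambda>N::nat.
               (SUP n\<in>{n::nat. 1 \<le> n \<and> real n \<le> real N powr \<beta>}.
                  \<bar>log (real N) (real (W n \<omega>)) - log (real N) (sqrt (real n))\<bar>))
             \<longlongrightarrow> 0) sequentially"
        by eventually_elim (use \<open>\<beta> > 0\<close> in blast)
    qed
    show "AE \<omega> in M. ((\<lambda>N::nat.
               Max ((\<lambda>k. Max ((\<lambda>n. log (real N) (real k) - log (real N) (real (W n \<omega>)))
                               ` {hit_time k (\<lambda>m. W m \<omega>) ..< hit_time (Suc k) (\<lambda>m. W m \<omega>)}))
                    ` {1..N}))
             \<longlongrightarrow> 0) sequentially"
      using G by eventually_elim blast
  qed
qed


end
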